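(* Let $I$ be a $*$-ideal of a $*$-algebra $\mathcal A$. Then $I$ is real and $\dim(\mathcal A/I)<\infty$ if and only if $I=\ker\pi$ for some finite-dimensional $*$-representation $\pi$ of $\mathcal A$. In particular, if $I$ is a $*$-ideal of $\mathcal A$ with $\dim(\mathcal A/\sqrt[\mathrm{real}]{I})<\infty$, then $\sqrt[\Pi\text{-}\mathrm{hard}]{I}=\sqrt[\mathrm{real}]{I}$.
   Context: $\mathbb F\in\{\mathbb R,\mathbb C\}$. A $*$-algebra is a unital associative $\mathbb F$-algebra $\mathcal A$ with an involution $*$ (conjugate-linear, $(ab)^*=b^*a^*$, $a^{**}=a$). A $*$-ideal is a two-sided ideal $I$ with $I^*=I$. A left ideal $I$ is real if whenever $a_1,\dots,a_n\in\mathcal A$ and $\sum_j a_j^*a_j\in I+I^*$, every $a_j\in I$; a two-sided ideal is real if it is real as a left ideal. The real radical $\sqrt[\mathrm{real}]{I}$ is the intersection of all real left ideals containing $I$. A $*$-representation $\pi$ of $\mathcal A$ is a unital $*$-homomorphism from $\mathcal A$ into the $*$-algebra of adjointable linear operators on a pre-Hilbert space $V_\pi$ over $\mathbb F$; it is finite-dimensional if $\dim V_\pi<\infty$. $\Pi$ denotes the class of finite-dimensional $*$-representations. For a class $\mathcal C$ of $*$-representations, $T\subseteq\mathcal C$ and $\mathcal S\subseteq\mathcal A$: $\mathcal I^{\mathcal C}_{\mathrm{hard}}(T)=\{a\in\mathcal A:\pi(a)=0\ \forall\pi\in T\}$, $V^{\mathcal C}_{\mathrm{hard}}(\mathcal S)=\{\pi\in\mathcal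 C:\pi(s)=0\ \forall s\in\mathcal S\}$, and $\sqrt[\mathcal C\text{-}\mathrm{hard}]{\mathcal S}=\mathcal I^{\mathcal C}_{\mathrm{hard}}(V^{\mathcal C}_{\mathrm{hard}}(\mathcal S))$. *)

theory Defs
  imports "Jordan_Normal_Form.Matrix"
begin

text \<open>Scalars: a field 'k with conjugation (real: identity, complex: cnj).
  A unital associative 'k-algebra is a type 'a of class {ring, monoid_mult}
  together with a scalar multiplication sm; st is the involution.\<close>

definition star_algebra ::
  "('k::conjugatable_field \<Rightarrow> 'a::{ring,monoid_mult} \<Rightarrow> 'a) \<Rightarrow> ('a \<Rightarrow> 'a) \<Rightarrow> bool" where
  "star_algebra sm st \<longleftrightarrow>
     (\<forall>c x y. sm c (x + y) = sm c x + sm c y) \<and>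
     (\<forall>c d x. sm (c + d) x = sm c x + sm d x) \<and>
     (\<forall>c d x. sm (c * d) x = sm c (sm d x)) \<and>
     (\<forall>x. sm 1 x = x) \<and>
     (\<forall>c x y. sm c (x * y) = sm c x * y) \<and>
     (\<forall>c x y. sm c (x * y) = x * sm c y) \<and>
     (\<forall>x y. st (x + y) = st x + st y) \<and>
     (\<forall>c x. st (sm c x) = sm (conjugate c) (st x)) \<and>
     (\<forall>x y. st (x * y) = st y * st x) \<and>
     (\<forall>x. st (st x) = x)"

text \<open>Left ideal (closure under scalars follows from unitality: sm c x = sm c 1 * x).\<close>
definition left_ideal_of :: "'a::{ring,monoid_mult} set \<Rightarrow> bool" where
  "left_ideal_of I \<longleftrightarrow> 0 \<in> I \<and> (\<forall>x\<in>I. \<forall>y\<in>I. x + y \<in> I) \<and> (\<forall>a. \<forall>x\<in>I. a * x \<in> I)"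

definition two_sided_ideal_of :: "'a::{ring,monoid_mult} set \<Rightarrow> bool" where
  "two_sided_ideal_of I \<longleftrightarrow> left_ideal_of I \<and> (\<forall>a. \<forall>x\<in>I. x * a \<in> I)"

definition star_ideal :: "('a::{ring,monoid_mult} \<Rightarrow> 'a) \<Rightarrow> 'a set \<Rightarrow> bool" where
  "star_ideal st I \<longleftrightarrow> two_sided_ideal_of I \<and> st ` I = I"

definition plus_star :: "('a::{ring,monoid_mult} \<Rightarrow> 'a) \<Rightarrow> 'a set \<Rightarrow> 'a set" where
  "plus_star st I = {x + st y | x y. x \<in> I \<and> y \<in> I}"

text \<open>Real left ideal (a two-sided ideal is real iff it is real as a left ideal).\<close>
definition real_ideal :: "('a::{ring,monoid_mult} \<Rightarrow> 'a) \<Rightarrow> 'a set \<Rightarrow> bool" where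
  "real_ideal st I \<longleftrightarrow> left_ideal_of I \<and>
     (\<forall>(n::nat) (a::nat \<Rightarrow> 'a). (\<Sum>j<n. st (a j) * a j) \<in> plus_star st I \<longrightarrow> (\<forall>j<n. a j \<in> I))"

definition real_radical :: "('a::{ring,monoid_mult} \<Rightarrow> 'a) \<Rightarrow> 'a set \<Rightarrow> 'a set" where
  "real_radical st I = \<Inter> {J. real_ideal st J \<and> I \<subseteq> J}"

text \<open>dim (A / I) < \<infinity>: A is spanned modulo I by finitely many elements.\<close>
definition fin_codim :: "('k \<Rightarrow> 'a::{ring,monoid_mult} \<Rightarrow> 'a) \<Rightarrow> 'a set \<Rightarrow> bool" where
  "fin_codim sm I \<longleftrightarrow> (\<exists>B. finite B \<and> (\<forall>a. \<exists>c. a - (\<Sum>b\<in>B. sm (c b) b) \<in> I))"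

definition adj_mat :: "'k::conjugatable_field mat \<Rightarrow> 'k mat" where
  "adj_mat A = mat (dim_col A) (dim_row A) (\<lambda>(i, j). conjugate (A $$ (j, i)))"

text \<open>Finite-dimensional *-representation on 'k^n (standard inner product), n \<ge> 0.\<close>
definition fd_star_rep ::
  "('k::conjugatable_field \<Rightarrow> 'a::{ring,monoid_mult} \<Rightarrow> 'a) \<Rightarrow> ('a \<Rightarrow> 'a) \<Rightarrow> nat \<Rightarrow> ('a \<Rightarrow> 'k mat) \<Rightarrow> bool" where
  "fd_star_rep sm st n \<pi> \<longleftrightarrow>
     (\<forall>a. \<pi> a \<in> carrier_mat n n) \<and>
     \<pi> 1 = 1\<^sub>m n \<and>
     (\<forall>a b. \<pi> (a + b) = \<pi> a + \<pi> b) \<and>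
     (\<forall>c a. \<pi> (sm c a) = c \<cdot>\<^sub>m \<pi> a) \<and>
     (\<forall>a b. \<pi> (a * b) = \<pi> a * \<pi> b) \<and>
     (\<forall>a. \<pi> (st a) = adj_mat (\<pi> a))"

definition rep_kernel :: "nat \<Rightarrow> ('a \<Rightarrow> 'k::zero mat) \<Rightarrow> 'a set" where
  "rep_kernel n \<pi> = {a. \<pi> a = 0\<^sub>m n n}"

text \<open>V_hard^Pi(S) as a predicate on (n, pi), and I_hard^Pi; their composition is the Pi-hard radical.\<close>
definition V_hard_Pi ::
  "('k::conjugatable_field \<Rightarrow> 'a::{ring,monoid_mult} \<Rightarrow> 'a) \<Rightarrow> ('a \<Rightarrow> 'a) \<Rightarrow> 'a set \<Rightarrow> nat \<Rightarrow> ('a \<Rightarrow> 'k mat) \<Rightarrow> bool" where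
  "V_hard_Pi sm st S n \<pi> \<longleftrightarrow> fd_star_rep sm st n \<pi> \<and> (\<forall>s\<in>S. \<pi> s = 0\<^sub>m n n)"

definition I_hard_Pi :: "(nat \<Rightarrow> ('a \<Rightarrow> 'k::zero mat) \<Rightarrow> bool) \<Rightarrow> 'a set" where
  "I_hard_Pi T = {a. \<forall>n \<pi>. T n \<pi> \<longrightarrow> \<pi> a = 0\<^sub>m n n}"

definition Pi_hard_radical ::
  "('k::conjugatable_field \<Rightarrow> 'a::{ring,monoid_mult} \<Rightarrow> 'a) \<Rightarrow> ('a \<Rightarrow> 'a) \<Rightarrow> 'a set \<Rightarrow> 'a set" where
  "Pi_hard_radical sm st S = I_hard_Pi (V_hard_Pi sm st S)"

end

theory Submission
  imports Defs
begin

lemma BW_finite: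
  fixes X :: "nat \<Rightarrow> 'i \<Rightarrow> real"
  assumes "finite S" and "\<And>l s. s \<in> S \<Longrightarrow> \<bar>X l s\<bar> \<le> C"
  shows "\<exists>r. strict_mono r \<and> (\<forall>s\<in>S. convergent (\<lambda>l. X (r l) s))"
  using assms
proof (induction S arbitrary: X rule: finite_induct)
  case empty
  then show ?case by (auto intro: strict_mono_id)
next
  case (insert s0 S)
  have bS: "\<And>l s. s \<in> S \<Longrightarrow> \<bar>X l s\<bar> \<le> C" using insert.prems by auto
  obtain r1 where r1: "strict_mono r1" "\<forall>s\<in>S. convergent (\<lambda>l. X (r1 l) s)"
    using insert.IH[of X, OF bS] by metis
  obtain r2 where r2: "strict_mono r2" "monoseq (\<lambda>l. X (r1 (r2 l)) s0)"
    using seq_monosub[of "\<lambda>l. X (r1 l) s0"] by auto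
  have "Bseq (\<lambda>l. X (r1 (r2 l)) s0)"
    using insert.prems by (intro BseqI'[where K=C]) auto
  then have c0: "convergent (\<lambda>l. X (r1 (r2 l)) s0)"
    using Bseq_monoseq_convergent r2 by blast
  have "convergent (\<lambda>l. X (r1 (r2 l)) s)" if "s \<in> S" for s
  proof -
    have "convergent (\<lambda>l. X (r1 l) s)" using r1 that by blast
    then show ?thesis using convergent_subseq_convergent[OF _ r2(1)]
      by (auto simp: o_def)
  qed
  moreover have "strict_mono (r1 \<circ> r2)" using r1 r2 strict_mono_o by blast
  ultimately show ?case using c0 by (intro exI[of _ "r1 \<circ> r2"]) (auto simp: o_def)
qed

definition gram :: "(nat \<Rightarrow> nat \<Rightarrow> real) \<Rightarrow> nat \<Rightarrow> nat \<Rightarrow> nat \<Rightarrow> real" where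
  "gram U r i i' = (\<Sum>j<r. U j i * U j i')"

lemma chol_step:
  "\<exists>g W. (\<forall>j. W j p = 0) \<and> (\<forall>i i'. gram U r i i' = gram W r i i' + g i * g i')"
proof (cases "gram U r p p = 0")
  case True
  then have "\<forall>j<r. U j p = 0"
    unfolding gram_def by (simp add: sum_nonneg_eq_0_iff)
  then have z: "gram U r i p = 0" "gram U r p i = 0" for i
    unfolding gram_def by auto
  define W where "W = (\<lambda>j i. if i = p then 0 else U j i)"
  have "gram U r i i' = gram W r i i' + 0 * 0" for i i'
    using z by (cases "i = p"; cases "i' = p") (auto simp: W_def gram_def)
  then show ?thesis by (intro exI[of _ "\<lambda>_. 0"] exI[of _ W]) (auto simp: W_def)
next
  case False
  define \<alpha> where "\<alpha> = gram U r p p"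
  have apos: "\<alpha> > 0" using False unfolding \<alpha>_def gram_def
    by (metis (no_types, lifting) order_le_less sum_nonneg zero_le_square)
  define s where "s = sqrt \<alpha>"
  have spos: "s > 0" and ss: "s * s = \<alpha>" using apos by (auto simp: s_def)
  define c where "c = (\<lambda>j. U j p / s)"
  define g where "g = (\<lambda>i. \<Sum>j<r. c j * U j i)"
  define W where "W = (\<lambda>j i. U j i - c j * g i)"
  have csum: "(\<Sum>j<r. c j * c j) = 1"
  proof -
    have "(\<Sum>j<r. c j * c j) = (\<Sum>j<r. U j p * U j p) / (s * s)"
      by (simp add: c_def sum_divide_distrib)
    also have "\<dots> = 1" using ss apos by (simp add: \<alpha>_def gram_def)
    finally show ?thesis .
  qed
  have gp: "g p = s"
  proof -
    have "g p = (\<Sum>j<r. U j p * U j p) / s"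
      by (simp add: g_def c_def sum_divide_distrib)
    also have "\<dots> = s" using ss spos by (simp add: \<alpha>_def[symmetric] gram_def[symmetric] field_simps)
    finally show ?thesis .
  qed
  have Wp: "W j p = 0" for j using spos by (simp add: W_def gp c_def)
  have "gram U r i i' = gram W r i i' + g i * g i'" for i i'
  proof -
    have "gram W r i i' = (\<Sum>j<r. U j i * U j i') - g i' * (\<Sum>j<r. c j * U j i)
        - g i * (\<Sum>j<r. c j * U j i') + g i * g i' * (\<Sum>j<r. c j * c j)"
      by (simp add: gram_def W_def algebra_simps sum_subtractf sum_distrib_left sum.distrib)
    moreover have "(\<Sum>j<r. c j * U j i) = g i" "(\<Sum>j<r. c j * U j i') = g i'" by (simp_all add: g_def)
    ultimately show ?thesis using csum by (simp add: gram_def algebra_simps)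
  qed
  then show ?thesis using Wp by blast
qed

lemma chol: "\<exists>V. \<forall>i<p. \<forall>i'<p. gram V p i i' = gram U r i i'"
proof (induction p arbitrary: U)
  case 0
  then show ?case by auto
next
  case (Suc p)
  obtain g W where W: "\<forall>j. W j p = 0" "\<forall>i i'. gram U r i i' = gram W r i i' + g i * g i'"
    using chol_step by blast
  obtain V where V: "\<forall>i<p. \<forall>i'<p. gram V p i i' = gram W r i i'"
    using Suc.IH[of W] by blast
  define V' where "V' = (\<lambda>k i. if k < p then (if i < p then V k i else 0) else g i)"
  have "gram V' (Suc p) i i' = gram U r i i'" if "i < Suc p" "i' < Suc p" for i i'
  proof -
    have e: "gram V' (Suc p) i i' = (\<Sum>k<p. V' k i * V' k i') + g i * g i'"
      by (simp add: gram_def V'_def)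
    show ?thesis
    proof (cases "i < p \<and> i' < p")
      case True
      then have "(\<Sum>k<p. V' k i * V' k i') = gram V p i i'"
        by (simp add: V'_def gram_def)
      then show ?thesis using e V True W by simp
    next
      case False
      then have "i = p \<or> i' = p" using that by auto
      then have "gram W r i i' = 0" using W(1) by (auto simp: gram_def)
      moreover have "(\<Sum>k<p. V' k i * V' k i') = 0"
        using False that by (auto simp: V'_def)
      ultimately show ?thesis using e W by simp
    qed
  qed
  then show ?case by blast
qed

definition Qv :: "nat \<Rightarrow> (nat \<Rightarrow> nat \<Rightarrow> nat \<Rightarrow> real) \<Rightarrow> (nat \<Rightarrow> real) \<Rightarrow> nat \<Rightarrow> real" where
  "Qv n E u k = (\<Sum>i<n. \<Sum>i'<n. u i * u i' * E i i' k)"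

lemma sumQ: "(\<Sum>j<r. Qv n E (U j) k) = (\<Sum>i<n. \<Sum>i'<n. gram U r i i' * E i i' k)"
proof -
  have "(\<Sum>j<r. Qv n E (U j) k) = (\<Sum>j<r. \<Sum>i<n. \<Sum>i'<n. U j i * U j i' * E i i' k)"
    by (simp add: Qv_def)
  also have "\<dots> = (\<Sum>i<n. \<Sum>j<r. \<Sum>i'<n. U j i * U j i' * E i i' k)"
    by (rule sum.swap)
  also have "\<dots> = (\<Sum>i<n. \<Sum>i'<n. \<Sum>j<r. U j i * U j i' * E i i' k)"
    by (intro sum.cong refl sum.swap)
  also have "\<dots> = (\<Sum>i<n. \<Sum>i'<n. gram U r i i' * E i i' k)"
    by (simp add: gram_def sum_distrib_right)
  finally show ?thesis .
qed

lemma elem_ineq: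
  fixes x y :: real
  assumes "\<And>t. 0 < t \<Longrightarrow> t < 1 \<Longrightarrow> 0 \<le> 2*x + t*y" and "y \<ge> 0"
  shows "0 \<le> x"
proof (rule ccontr)
  assume "\<not> 0 \<le> x"
  then have xn: "x < 0" by simp
  define t where "t = min (1/2) (-x/(y+1))"
  have "x/(y+1) < 0" using xn assms(2) by (simp add: divide_neg_pos)
  then have tpos: "0 < t" "t < 1" by (auto simp: t_def)
  have "t * y \<le> (-x/(y+1)) * y" using assms(2) by (intro mult_right_mono) (auto simp: t_def)
  also have "\<dots> < -x"
  proof -
    have "(-x/(y+1)) * y = -x * (y/(y+1))" by simp
    also have "\<dots> < -x * 1" using xn assms(2) by (intro mult_strict_left_mono) auto
    finally show ?thesis by simp
  qed
  finally have "2*x + t*y < x" by simp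
  with assms(1)[OF tpos] xn show False by simp
qed

lemma core:
  assumes real: "\<And>(r::nat) U. (\<forall>k<m. (\<Sum>j<r. Qv n E (U j) k) = 0) \<Longrightarrow> \<forall>j<r. \<forall>i<n. U j i = 0"
  shows "\<exists>w. \<forall>u. (\<exists>i<n. u i \<noteq> 0) \<longrightarrow> 0 < (\<Sum>k<m. w k * Qv n E u k)"
proof (cases "n = 0")
  case True
  then show ?thesis by auto
next
  case False
  define F where "F = (\<lambda>V k. \<Sum>j<n. Qv n E (V j) k)"
  define Nf where "Nf = (\<lambda>x::nat\<Rightarrow>real. \<Sum>k<m. (x k)^2)"
  define S where "S = (\<lambda>V::nat\<Rightarrow>nat\<Rightarrow>real. \<Sum>j<n. \<Sum>i<n. (V j i)^2)"
  define K where "K = {V. S V = 1}"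
  have red: "\<exists>V\<in>K. \<forall>k. F V k = (\<Sum>j<r. Qv n E (U j) k)"
    if "(\<Sum>j<r. \<Sum>i<n. (U j i)^2) = 1" for r and U :: "nat \<Rightarrow> nat \<Rightarrow> real"
  proof -
    obtain V where V: "\<forall>i<n. \<forall>i'<n. gram V n i i' = gram U r i i'"
      using chol by blast
    have "S V = (\<Sum>i<n. gram V n i i)"
      unfolding S_def gram_def by (subst sum.swap) (simp add: power2_eq_square)
    also have "\<dots> = (\<Sum>i<n. gram U r i i)" using V by simp
    also have "\<dots> = 1" using that unfolding gram_def by (subst sum.swap) (simp add: power2_eq_square)
    finally have "V \<in> K" by (simp add: K_def)
    moreover have "F V k = (\<Sum>j<r. Qv n E (U j) k)" for k
      unfolding F_def sumQ using V by simp
    ultimately show ?thesis by blast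
  qed
  define V0 where "V0 = (\<lambda>j::nat. \<lambda>i::nat. if j = 0 \<and> i = 0 then 1 else (0::real))"
  have sq: "(V0 j i)^2 = (if j = 0 then (if i = 0 then 1 else 0) else 0)" for j i
    by (simp add: V0_def)
  have inner: "(\<Sum>i<n. (V0 j i)^2) = (if j = 0 then 1 else 0)" for j
    using False by (cases "j=0") (simp_all add: sq)
  have V0K: "V0 \<in> K" using False by (simp add: K_def S_def inner)
  have Kne: "K \<noteq> {}" using V0K by blast
  define \<delta> where "\<delta> = (INF V\<in>K. Nf (F V))"
  have bdd: "bdd_below ((\<lambda>V. Nf (F V)) ` K)"
    by (rule bdd_belowI[of _ 0]) (auto simp: Nf_def intro: sum_nonneg)
  have \<delta>le: "\<delta> \<le> Nf (F V)" if "V \<in> K" for V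
    unfolding \<delta>_def using bdd that by (rule cINF_lower)
  have "\<exists>V\<in>K. Nf (F V) < \<delta> + 1 / (Suc l)" for l
  proof -
    have "\<delta> < \<delta> + 1 / Suc l" by simp
    then show ?thesis unfolding \<delta>_def using Kne by (subst (asm) cINF_less_iff[OF Kne bdd]) auto
  qed
  then obtain Vs where Vs: "\<And>l. Vs l \<in> K" "\<And>l. Nf (F (Vs l)) < \<delta> + 1 / (Suc l)"
    by metis
  have bnd: "\<bar>Vs l j i\<bar> \<le> 1" if "j < n" "i < n" for l j i
  proof -
    have "(Vs l j i)^2 \<le> (\<Sum>i'<n. (Vs l j i')^2)"
      using that by (intro member_le_sum) auto
    also have "\<dots> \<le> S (Vs l)"
      unfolding S_def using that by (intro member_le_sum[of _ _ "\<lambda>j. \<Sum>i'<n. (Vs l j i')^2"]) (auto intro: sum_nonneg)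
    also have "\<dots> = 1" using Vs(1) by (simp add: K_def)
    finally show ?thesis by (simp add: abs_square_le_1)
  qed
  obtain rr where rr: "strict_mono rr" "\<And>j i. j<n \<Longrightarrow> i<n \<Longrightarrow> convergent (\<lambda>l. Vs (rr l) j i)"
  proof -
    obtain r where r: "strict_mono r" "\<forall>s\<in>{..<n}\<times>{..<n}. convergent (\<lambda>l. Vs (r l) (fst s) (snd s))"
      using BW_finite[of "{..<n}\<times>{..<n}" "\<lambda>l p. Vs l (fst p) (snd p)" 1] bnd by auto
    show ?thesis using that[of r] r by auto
  qed
  define Vst where "Vst = (\<lambda>j i. lim (\<lambda>l. Vs (rr l) j i))"
  have lim: "(\<lambda>l. Vs (rr l) j i) \<longlonglongrightarrow> Vst j i" if "j<n" "i<n" for j i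
    using rr(2)[OF that] unfolding Vst_def by (simp add: convergent_LIMSEQ_iff)
  have limS: "(\<lambda>l. S (Vs (rr l))) \<longlonglongrightarrow> S Vst"
    unfolding S_def by (intro tendsto_sum tendsto_power lim) auto
  moreover have "(\<lambda>l. S (Vs (rr l))) = (\<lambda>l. 1)" using Vs(1) by (simp add: K_def)
  ultimately have "(\<lambda>l. 1::real) \<longlonglongrightarrow> S Vst" by simp
  then have SV: "S Vst = 1" by (simp add: LIMSEQ_const_iff)
  have NF: "(\<lambda>l. Nf (F (Vs (rr l)))) \<longlonglongrightarrow> Nf (F Vst)"
    unfolding Nf_def F_def Qv_def by (intro tendsto_sum tendsto_power tendsto_mult tendsto_const lim) auto
  have lim2: "(\<lambda>l. \<delta> + inverse (real (Suc l))) \<longlonglongrightarrow> \<delta> + 0"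
    by (intro tendsto_add tendsto_const LIMSEQ_inverse_real_of_nat)
  have le2: "Nf (F (Vs (rr l))) \<le> \<delta> + inverse (real (Suc l))" for l
  proof -
    have "l \<le> rr l" using seq_suble[OF rr(1)] by simp
    then have "1 / real (Suc (rr l)) \<le> 1 / real (Suc l)"
      by (intro divide_left_mono) auto
    then show ?thesis using Vs(2)[of "rr l"] by (simp add: inverse_eq_divide)
  qed
  have "Nf (F Vst) \<le> \<delta>"
    using LIMSEQ_le[OF NF lim2] le2 by auto
  then have minim: "Nf (F Vst) \<le> Nf (F V)" if "V \<in> K" for V
    using \<delta>le[OF that] by simp
  define d where "d = F Vst"
  have Nfpos: "0 < Nf d"
  proof -
    have nn: "0 \<le> Nf d" unfolding Nf_def by (auto intro: sum_nonneg)
    { assume "Nf d = 0"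
      then have "\<forall>k<m. d k = 0" unfolding Nf_def by (simp add: sum_nonneg_eq_0_iff)
      then have "\<forall>j<n. \<forall>i<n. Vst j i = 0" using real[where r=n and U=Vst] by (simp add: d_def F_def)
      then have "S Vst = 0" by (simp add: S_def)
      with SV have False by simp }
    with nn show ?thesis by force
  qed
  have Qv_scale: "Qv n E (\<lambda>i. a * v i) k = a^2 * Qv n E v k" for a v k
    by (simp add: Qv_def sum_distrib_left algebra_simps power2_eq_square)
  show ?thesis
  proof (intro exI[of _ d] allI impI)
    fix u :: "nat \<Rightarrow> real" assume "\<exists>i<n. u i \<noteq> 0"
    then obtain i0 where i0: "i0 < n" "u i0 \<noteq> 0" by blast
    define \<nu> where "\<nu> = (\<Sum>i<n. (u i)^2)"
    have nupos: "0 < \<nu>"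
    proof -
      have "(u i0)^2 \<le> \<nu>" unfolding \<nu>_def using i0 by (intro member_le_sum) auto
      moreover have "0 < (u i0)^2" using i0 by simp
      ultimately show ?thesis by linarith
    qed
    define uh where "uh = (\<lambda>i. u i / sqrt \<nu>)"
    have uhu: "u = (\<lambda>i. sqrt \<nu> * uh i)" using nupos by (auto simp: uh_def)
    have uh1: "(\<Sum>i<n. (uh i)^2) = 1"
      using nupos by (simp add: uh_def power_divide sum_divide_distrib[symmetric] \<nu>_def[symmetric])
    define q where "q = Qv n E uh"
    have Qu: "Qv n E u k = \<nu> * q k" for k
      using nupos by (subst uhu) (simp add: Qv_scale q_def)
    define x where "x = (\<Sum>k<m. d k * (q k - d k))"
    define y where "y = (\<Sum>k<m. (q k - d k)^2)"
    have ineq: "0 \<le> 2*x + t*y" if t: "0 < t" "t < 1" for t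
    proof -
      define U where "U = (\<lambda>j. if j < n then (\<lambda>i. sqrt (1-t) * Vst j i) else (\<lambda>i. sqrt t * uh i))"
      have "(\<Sum>j<Suc n. \<Sum>i<n. (U j i)^2) = (1-t) * S Vst + t * (\<Sum>i<n. (uh i)^2)"
        using t by (simp add: U_def S_def power_mult_distrib sum_distrib_left)
      also have "\<dots> = 1" using SV uh1 by simp
      finally obtain V where V: "V \<in> K" "\<forall>k. F V k = (\<Sum>j<Suc n. Qv n E (U j) k)"
        using red by blast
      have FV: "F V = (\<lambda>k. (1-t) * d k + t * q k)"
      proof
        fix k
        have "F V k = (\<Sum>j<n. Qv n E (\<lambda>i. sqrt (1-t) * Vst j i) k) + Qv n E (\<lambda>i. sqrt t * uh i) k"
          using V(2) by (simp add: U_def)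
        also have "\<dots> = (1-t) * d k + t * q k"
          using t by (simp add: Qv_scale d_def F_def q_def sum_distrib_left)
        finally show "F V k = (1-t) * d k + t * q k" .
      qed
      have "Nf d \<le> Nf (F V)" using minim[OF V(1)] by (simp add: d_def)
      also have "Nf (F V) = Nf d + 2*t*x + t^2*y"
      proof -
        have "Nf (F V) = (\<Sum>k<m. (d k)^2 + 2*t*(d k * (q k - d k)) + t^2 * (q k - d k)^2)"
          unfolding FV Nf_def by (intro sum.cong refl) (simp add: power2_eq_square algebra_simps)
        also have "\<dots> = Nf d + 2*t*x + t^2*y"
          by (simp add: sum.distrib sum_distrib_left Nf_def x_def y_def)
        finally show ?thesis .
      qed
      finally have "0 \<le> t * (2*x + t*y)" by (simp add: power2_eq_square algebra_simps)
      then show ?thesis using t by (simp add: zero_le_mult_iff)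
    qed
    have "0 \<le> y" unfolding y_def by (auto intro: sum_nonneg)
    then have "0 \<le> x" using elem_ineq ineq by blast
    have dq: "(\<Sum>k<m. d k * q k) = x + Nf d"
      by (simp add: x_def Nf_def algebra_simps sum.distrib sum_subtractf power2_eq_square)
    have "0 < (\<Sum>k<m. d k * q k)" using dq \<open>0 \<le> x\<close> Nfpos by simp
    then show "0 < (\<Sum>k<m. d k * Qv n E u k)"
      using nupos by (simp add: Qu sum_distrib_left[symmetric] algebra_simps)
  qed
qed

locale salg =
  fixes sm :: "'k::conjugatable_field \<Rightarrow> 'a::{ring,monoid_mult} \<Rightarrow> 'a" and st :: "'a \<Rightarrow> 'a"
  assumes sa: "star_algebra sm st"
begin

lemma sm_add: "sm c (x + y) = sm c x + sm c y" using sa by (simp add: star_algebra_def)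
lemma sm_add_left: "sm (c + d) x = sm c x + sm d x" using sa by (simp add: star_algebra_def)
lemma sm_sm: "sm c (sm d x) = sm (c * d) x" using sa by (simp add: star_algebra_def)
lemma sm_one[simp]: "sm 1 x = x" using sa by (simp add: star_algebra_def)
lemma sm_mult_left: "sm c (x * y) = sm c x * y" using sa by (simp add: star_algebra_def)
lemma sm_mult_right: "sm c (x * y) = x * sm c y" using sa unfolding star_algebra_def by metis
lemma st_add: "st (x + y) = st x + st y" using sa by (simp add: star_algebra_def)
lemma st_sm: "st (sm c x) = sm (conjugate c) (st x)" using sa by (simp add: star_algebra_def)
lemma st_mult: "st (x * y) = st y * st x" using sa by (simp add: star_algebra_def)
lemma st_st[simp]: "st (st x) = x" using sa by (simp add: star_algebra_def)

lemma sm_zero[simp]: "sm c 0 = 0"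
  using sm_add[of c 0 0] by simp
lemma sm_zero_left[simp]: "sm 0 x = 0"
  using sm_add_left[of 0 0 x] by simp
lemma sm_minus: "sm c (- x) = - sm c x"
proof -
  have "sm c x + sm c (-x) = 0" using sm_add[of c x "-x"] by simp
  then show ?thesis by (metis neg_eq_iff_add_eq_0)
qed
lemma sm_diff: "sm c (x - y) = sm c x - sm c y"
  using sm_add[of c x "-y"] sm_minus by simp
lemma sm_minus_left: "sm (- c) x = - sm c x"
proof -
  have "sm c x + sm (-c) x = 0" using sm_add_left[of c "-c" x] by simp
  then show ?thesis by (metis neg_eq_iff_add_eq_0)
qed
lemma sm_diff_left: "sm (c - d) x = sm c x - sm d x"
  using sm_add_left[of c "-d" x] sm_minus_left by simp
lemma st_zero[simp]: "st 0 = 0"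
  using st_add[of 0 0] by simp
lemma st_minus: "st (- x) = - st x"
proof -
  have "st x + st (-x) = 0" using st_add[of x "-x"] by simp
  then show ?thesis by (metis neg_eq_iff_add_eq_0)
qed
lemma st_diff: "st (x - y) = st x - st y"
  using st_add[of x "-y"] st_minus by simp
lemma st_one[simp]: "st 1 = 1"
proof -
  have "st 1 = st 1 * st (st 1)" by simp
  also have "\<dots> = st (st 1 * 1)" by (simp only: st_mult st_st)
  finally show ?thesis by (metis mult_1_right st_st)
qed
lemma sm_scal: "sm c x = sm c 1 * x"
  using sm_mult_left[of c 1 x] by simp
lemma sm_sum: "sm c (\<Sum>i\<in>I. f i) = (\<Sum>i\<in>I. sm c (f i))"
  by (induction I rule: infinite_finite_induct) (auto simp: sm_add)
lemma sm_sum_left: "sm (\<Sum>i\<in>I. f i) x = (\<Sum>i\<in>I. sm (f i) x)"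
  by (induction I rule: infinite_finite_induct) (auto simp: sm_add_left)
lemma st_sum: "st (\<Sum>i\<in>I. f i) = (\<Sum>i\<in>I. st (f i))"
  by (induction I rule: infinite_finite_induct) (auto simp: st_add)

end

definition subsp :: "('k \<Rightarrow> 'a::{ring,monoid_mult} \<Rightarrow> 'a) \<Rightarrow> 'a set \<Rightarrow> bool" where
  "subsp sm Z \<longleftrightarrow> 0 \<in> Z \<and> (\<forall>x\<in>Z. \<forall>y\<in>Z. x + y \<in> Z) \<and> (\<forall>c. \<forall>x\<in>Z. sm c x \<in> Z)"

context salg begin

lemma subsp_minus: "subsp sm Z \<Longrightarrow> x \<in> Z \<Longrightarrow> - x \<in> Z"
  unfolding subsp_def using sm_minus_left[of 1 x] by (metis sm_one)
lemma subsp_diff: "subsp sm Z \<Longrightarrow> x \<in> Z \<Longrightarrow> y \<in> Z \<Longrightarrow> x - y \<in> Z"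
  using subsp_minus[of Z y] unfolding subsp_def by (metis diff_conv_add_uminus)
lemma subsp_sum: "subsp sm Z \<Longrightarrow> (\<And>i. i \<in> I \<Longrightarrow> f i \<in> Z) \<Longrightarrow> (\<Sum>i\<in>I. f i) \<in> Z"
  unfolding subsp_def by (induction I rule: infinite_finite_induct) auto

definition spans :: "'a set \<Rightarrow> 'i set \<Rightarrow> ('i \<Rightarrow> 'a) \<Rightarrow> bool" where
  "spans Z D g \<longleftrightarrow> finite D \<and> (\<forall>a. \<exists>c. a - (\<Sum>d\<in>D. sm (c d) (g d)) \<in> Z)"

definition indep :: "'a set \<Rightarrow> 'i set \<Rightarrow> ('i \<Rightarrow> 'a) \<Rightarrow> bool" where
  "indep Z D g \<longleftrightarrow> (\<forall>c. (\<Sum>d\<in>D. sm (c d) (g d)) \<in> Z \<longrightarrow> (\<forall>d\<in>D. c d = 0))"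

lemma remove_dep:
  assumes Z: "subsp sm Z" and sp: "spans Z D g" and d0: "d0 \<in> D" and c0: "c d0 \<noteq> 0"
    and z: "(\<Sum>d\<in>D. sm (c d) (g d)) \<in> Z"
  shows "spans Z (D - {d0}) g"
proof -
  have fin: "finite D" using sp by (simp add: spans_def)
  define z where "z = (\<Sum>d\<in>D. sm (c d) (g d))"
  have split: "(\<Sum>d\<in>D. sm (f d) (g d)) = sm (f d0) (g d0) + (\<Sum>d\<in>D-{d0}. sm (f d) (g d))" for f
    using fin d0 by (simp add: sum.remove)
  show ?thesis unfolding spans_def
  proof (intro conjI allI)
    show "finite (D - {d0})" using fin by simp
    fix a
    obtain e where e: "a - (\<Sum>d\<in>D. sm (e d) (g d)) \<in> Z" using sp unfolding spans_def by blast
    define lam where "lam = e d0 / c d0"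
    define e' where "e' = (\<lambda>d. e d - lam * c d)"
    have "(\<Sum>d\<in>D-{d0}. sm (e' d) (g d)) = (\<Sum>d\<in>D-{d0}. sm (e d) (g d)) - sm lam (\<Sum>d\<in>D-{d0}. sm (c d) (g d))"
      by (simp add: e'_def sm_diff_left sm_sum sm_sm sum_subtractf)
    also have "(\<Sum>d\<in>D-{d0}. sm (c d) (g d)) = z - sm (c d0) (g d0)"
      using split[of c] by (simp add: z_def)
    also have "sm lam (z - sm (c d0) (g d0)) = sm lam z - sm (e d0) (g d0)"
      using c0 by (simp add: sm_diff sm_sm lam_def)
    finally have eq: "(\<Sum>d\<in>D-{d0}. sm (e' d) (g d)) = (\<Sum>d\<in>D. sm (e d) (g d)) - sm lam z"
      using split[of e] by (simp add: algebra_simps)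
    have "a - (\<Sum>d\<in>D-{d0}. sm (e' d) (g d)) = (a - (\<Sum>d\<in>D. sm (e d) (g d))) + sm lam z"
      unfolding eq by (simp add: algebra_simps)
    moreover have "sm lam z \<in> Z" using Z z unfolding subsp_def z_def by blast
    ultimately show "\<exists>c. a - (\<Sum>d\<in>D-{d0}. sm (c d) (g d)) \<in> Z"
      using Z e unfolding subsp_def by metis
  qed
qed

lemma exists_basis:
  assumes Z: "subsp sm Z" and sp: "spans Z (D::'i set) g"
  shows "\<exists>D'. D' \<subseteq> D \<and> spans Z D' g \<and> indep Z D' g"
proof -
  define P where "P = (\<lambda>k. \<exists>D'. D' \<subseteq> D \<and> spans Z D' g \<and> card D' = k)"
  have "P (card D)" using sp by (auto simp: P_def)
  then have "P (LEAST k. P k)" by (rule LeastI)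
  then obtain D' where D': "D' \<subseteq> D" "spans Z D' g" "card D' = (LEAST k. P k)"
    unfolding P_def by blast
  have "indep Z D' g"
    unfolding indep_def
  proof (intro allI impI ballI; rule ccontr)
    fix c d0 assume z: "(\<Sum>d\<in>D'. sm (c d) (g d)) \<in> Z" and d0: "d0 \<in> D'" and c0: "c d0 \<noteq> 0"
    have "spans Z (D' - {d0}) g" using remove_dep[OF Z D'(2) d0 c0 z] .
    moreover have "card (D' - {d0}) < card D'"
      using D'(2) d0 unfolding spans_def by (metis card_Diff1_less)
    ultimately have "P (card (D' - {d0}))" using D'(1) unfolding P_def by blast
    then have "(LEAST k. P k) \<le> card (D' - {d0})" by (rule Least_le)
    with \<open>card (D' - {d0}) < card D'\<close> D'(3) show False by simp
  qed
  with D' show ?thesis by blast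
qed

end

context salg begin

lemma left_ideal_subsp: "left_ideal_of J \<Longrightarrow> subsp sm J"
  unfolding left_ideal_of_def subsp_def using sm_scal by metis

lemma real_left: "real_ideal st J \<Longrightarrow> left_ideal_of J"
  by (simp add: real_ideal_def)

lemma plus_star_subsp:
  assumes "left_ideal_of J" shows "subsp sm (plus_star st J)"
proof -
  have J: "subsp sm J" using left_ideal_subsp[OF assms] .
  have "0 \<in> plus_star st J" unfolding plus_star_def using J unfolding subsp_def
    by (auto intro!: exI[of _ 0])
  moreover have "x + y \<in> plus_star st J" if xP: "x \<in> plus_star st J" and yP: "y \<in> plus_star st J" for x y
  proof -
    obtain a b where ab: "x = a + st b" "a \<in> J" "b \<in> J" using xP unfolding plus_star_def by blast
    obtain a' b' where ab': "y = a' + st b'" "a' \<in> J" "b' \<in> J" using yP unfolding plus_star_def by blast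
    have "x + y = (a + a') + st (b + b')" using ab ab' by (simp add: st_add algebra_simps)
    moreover have "a + a' \<in> J" "b + b' \<in> J" using J ab ab' unfolding subsp_def by auto
    ultimately show ?thesis unfolding plus_star_def by blast
  qed
  moreover have "sm c x \<in> plus_star st J" if xP: "x \<in> plus_star st J" for c x
  proof -
    obtain a b where ab: "x = a + st b" "a \<in> J" "b \<in> J" using xP unfolding plus_star_def by blast
    have "sm c x = sm c a + st (sm (conjugate c) b)" using ab by (simp add: sm_add st_sm)
    moreover have "sm c a \<in> J" "sm (conjugate c) b \<in> J" using J ab unfolding subsp_def by auto
    ultimately show ?thesis unfolding plus_star_def by blast
  qed
  ultimately show ?thesis unfolding subsp_def by blast
qed

lemma J_in_plus_star: "left_ideal_of J \<Longrightarrow> x \<in> J \<Longrightarrow> x \<in> plus_star st J"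
proof -
  assume "left_ideal_of J" "x \<in> J"
  moreover have "x = x + st 0" by simp
  ultimately show ?thesis unfolding plus_star_def left_ideal_of_def by blast
qed

lemma stJ_in_plus_star: "left_ideal_of J \<Longrightarrow> x \<in> J \<Longrightarrow> st x \<in> plus_star st J"
proof -
  assume "left_ideal_of J" "x \<in> J"
  moreover have "st x = 0 + st x" by simp
  ultimately show ?thesis unfolding plus_star_def left_ideal_of_def by blast
qed

lemma st_plus_star: "x \<in> plus_star st J \<Longrightarrow> st x \<in> plus_star st J"
proof -
  assume "x \<in> plus_star st J"
  then obtain a b where ab: "x = a + st b" "a \<in> J" "b \<in> J" unfolding plus_star_def by blast
  then have "st x = b + st a" by (simp add: st_add add.commute)
  with ab show ?thesis unfolding plus_star_def by blast
qed

lemma sq_cong: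
  assumes J: "left_ideal_of J" and "x - y \<in> J"
  shows "st x * x - st y * y \<in> plus_star st J"
proof -
  define j where "j = x - y"
  have x: "x = y + j" by (simp add: j_def)
  have "st x * x - st y * y = (st y * j + st j * j) + st (st y * j)"
    unfolding x by (simp add: st_add st_mult algebra_simps)
  moreover have "st y * j + st j * j \<in> J" "st y * j \<in> J"
    using J assms(2) unfolding left_ideal_of_def j_def by auto
  ultimately show ?thesis unfolding plus_star_def by blast
qed

lemma nat_index:
  assumes "spans Z D g" "indep Z D g"
  shows "\<exists>(n::nat) f. spans Z {..<n} f \<and> indep Z {..<n} f"
proof -
  have fin: "finite D" using assms(1) by (simp add: spans_def)
  obtain h where h: "bij_betw h {0..<card D} D" using ex_bij_betw_nat_finite[OF fin] by blast
  define n where "n = card D"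
  have h': "bij_betw h {..<n} D" using h by (simp add: n_def atLeast0LessThan)
  define f where "f = g \<circ> h"
  have re: "(\<Sum>i<n. q (h i)) = (\<Sum>d\<in>D. q d)" for q :: "_ \<Rightarrow> 'a"
    using sum.reindex_bij_betw[OF h', of q] .
  have "spans Z {..<n} f" unfolding spans_def
  proof (intro conjI allI)
    fix a
    obtain c where c: "a - (\<Sum>d\<in>D. sm (c d) (g d)) \<in> Z" using assms(1) unfolding spans_def by blast
    then show "\<exists>c. a - (\<Sum>i\<in>{..<n}. sm (c i) (f i)) \<in> Z"
      by (intro exI[of _ "c \<circ> h"]) (simp add: f_def re[of "\<lambda>d. sm (c d) (g d)"])
  qed simp
  moreover have "indep Z {..<n} f" unfolding indep_def
  proof (intro allI impI ballI)
    fix c i assume z: "(\<Sum>i\<in>{..<n}. sm (c i) (f i)) \<in> Z" and i: "i \<in> {..<n}"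
    define c' where "c' = c \<circ> inv_into {..<n} h"
    have inv: "inv_into {..<n} h (h i) = i" if "i < n" for i
      using h' that by (simp add: bij_betw_def inv_into_f_f)
    have "(\<Sum>i<n. sm (c i) (f i)) = (\<Sum>i<n. sm (c' (h i)) (g (h i)))"
      by (intro sum.cong refl) (simp add: c'_def f_def inv)
    also have "\<dots> = (\<Sum>d\<in>D. sm (c' d) (g d))" using re[of "\<lambda>d. sm (c' d) (g d)"] .
    finally have "\<forall>d\<in>D. c' d = 0" using z assms(2) unfolding indep_def by (metis lessThan_def)
    moreover have "h i \<in> D" using h' i by (auto simp: bij_betw_def)
    ultimately have "c (inv_into {..<n} h (h i)) = 0" by (simp add: c'_def)
    then show "c i = 0" using inv i by simp
  qed
  ultimately show ?thesis by blast
qed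

end

lemma conj_real[simp]: "conjugate (x::real) = x" by simp

lemma psi_exists:
  fixes smr :: "real \<Rightarrow> 'a::{ring,monoid_mult} \<Rightarrow> 'a"
  assumes sa: "star_algebra smr st" and rJ: "real_ideal st J" and sp: "salg.spans smr J D g"
  shows "\<exists>\<psi>. (\<forall>x y. \<psi> (x + y) = \<psi> x + \<psi> y) \<and> (\<forall>r x. \<psi> (smr r x) = r * \<psi> x)
     \<and> (\<forall>x. \<psi> (st x) = \<psi> x) \<and> (\<forall>x\<in>J. \<psi> x = 0) \<and> (\<forall>x. x \<notin> J \<longrightarrow> 0 < \<psi> (st x * x))"
proof -
  interpret salg smr st by (rule salg.intro[OF sa])
  have LJ: "left_ideal_of J" using rJ by (rule real_left)
  have SJ: "subsp smr J" using left_ideal_subsp[OF LJ] .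
  define M where "M = plus_star st J"
  have SM: "subsp smr M" unfolding M_def using plus_star_subsp[OF LJ] .
  have JM: "x \<in> J \<Longrightarrow> x \<in> M" for x unfolding M_def using J_in_plus_star[OF LJ] .
  obtain Df where Df: "spans J Df g" "indep J Df g" using exists_basis[OF SJ sp] by blast
  obtain n :: nat and f where f: "spans J {..<n} f" "indep J {..<n} f" using nat_index[OF Df] by blast
  have spM: "spans M D g" using sp JM unfolding spans_def by blast
  obtain De where De: "spans M De g" "indep M De g" using exists_basis[OF SM spM] by blast
  obtain m :: nat and e where e: "spans M {..<m} e" "indep M {..<m} e" using nat_index[OF De] by blast
  define coef where "coef = (\<lambda>a. SOME c. a - (\<Sum>k<m. smr (c k) (e k)) \<in> M)"
  have cM: "a - (\<Sum>k<m. smr (coef a k) (e k)) \<in> M" for a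
  proof -
    have "\<exists>c. a - (\<Sum>k<m. smr (c k) (e k)) \<in> M" using e(1) unfolding spans_def by (simp add: lessThan_def)
    then show ?thesis unfolding coef_def by (rule someI_ex)
  qed
  have uniq: "\<forall>k<m. c k = c' k" if "a - (\<Sum>k<m. smr (c k) (e k)) \<in> M" "a - (\<Sum>k<m. smr (c' k) (e k)) \<in> M" for a c c'
  proof -
    have "(a - (\<Sum>k<m. smr (c' k) (e k))) - (a - (\<Sum>k<m. smr (c k) (e k))) \<in> M"
      using subsp_diff[OF SM that(2) that(1)] .
    moreover have "(a - (\<Sum>k<m. smr (c' k) (e k))) - (a - (\<Sum>k<m. smr (c k) (e k))) = (\<Sum>k<m. smr (c k - c' k) (e k))"
      by (simp add: sm_diff_left sum_subtractf)
    ultimately have "\<forall>k<m. c k - c' k = 0" using e(2) unfolding indep_def by (metis lessThan_iff)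
    then show ?thesis by simp
  qed
  have coef_add: "coef (a + b) k = coef a k + coef b k" if "k < m" for a b k
  proof -
    have "(a + b) - (\<Sum>k<m. smr (coef a k + coef b k) (e k)) = (a - (\<Sum>k<m. smr (coef a k) (e k))) + (b - (\<Sum>k<m. smr (coef b k) (e k)))"
      by (simp add: sm_add_left sum.distrib algebra_simps)
    then have "(a + b) - (\<Sum>k<m. smr (coef a k + coef b k) (e k)) \<in> M"
      using cM[of a] cM[of b] SM unfolding subsp_def by metis
    then show ?thesis using uniq[of "a+b" "coef (a+b)" "\<lambda>k. coef a k + coef b k"] cM[of "a+b"] that by auto
  qed
  have coef_sm: "coef (smr r a) k = r * coef a k" if "k < m" for r a k
  proof -
    have "smr r a - (\<Sum>k<m. smr (r * coef a k) (e k)) = smr r (a - (\<Sum>k<m. smr (coef a k) (e k)))"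
      by (simp add: sm_diff sm_sum sm_sm)
    then have "smr r a - (\<Sum>k<m. smr (r * coef a k) (e k)) \<in> M"
      using cM[of a] SM unfolding subsp_def by metis
    then show ?thesis using uniq[of "smr r a" "coef (smr r a)" "\<lambda>k. r * coef a k"] cM[of "smr r a"] that by auto
  qed
  have coef_M: "coef z k = 0" if "z \<in> M" "k < m" for z k
  proof -
    have "z - (\<Sum>k<m. smr ((\<lambda>_. 0) k) (e k)) \<in> M" using that by simp
    then show ?thesis using uniq[of z "coef z" "\<lambda>_. 0"] cM[of z] that by auto
  qed
  have coef_sum: "coef (\<Sum>j\<in>S. h j) k = (\<Sum>j\<in>S. coef (h j) k)" if "k < m" for S h k
  proof (induction S rule: infinite_finite_induct)
    case (infinite A)
    then show ?case using coef_M[of 0 k] that SM unfolding subsp_def by simp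
  next
    case empty
    then show ?case using coef_M[of 0 k] that SM unfolding subsp_def by simp
  next
    case (insert x F)
    then show ?case using coef_add that by simp
  qed
  have coef_zero: "a \<in> M" if "\<forall>k<m. coef a k = 0" for a
    using cM[of a] that by simp
  define T where "T = (\<lambda>u. \<Sum>i<n. smr (u i) (f i))"
  define E where "E = (\<lambda>i i' k. coef (st (f i) * f i') k)"
  have TT: "st (T u) * T u = (\<Sum>i<n. \<Sum>i'<n. smr (u i * u i') (st (f i) * f i'))" for u
  proof -
    have "st (T u) = (\<Sum>i<n. smr (u i) (st (f i)))" by (simp add: T_def st_sum st_sm)
    then have "st (T u) * T u = (\<Sum>i<n. \<Sum>i'<n. smr (u i) (st (f i)) * smr (u i') (f i'))"
      by (simp only: T_def sum_product)
    also have "\<dots> = (\<Sum>i<n. \<Sum>i'<n. smr (u i * u i') (st (f i) * f i'))"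
      by (simp add: sm_mult_left[symmetric] sm_mult_right[symmetric] sm_sm mult.commute)
    finally show ?thesis .
  qed
  have coefTT: "coef (st (T u) * T u) k = Qv n E u k" if "k < m" for u k
    unfolding TT using that by (simp add: coef_sum coef_sm Qv_def E_def)
  have realcore: "\<forall>j<r. \<forall>i<n. U j i = 0" if "\<forall>k<m. (\<Sum>j<r. Qv n E (U j) k) = 0" for r :: nat and U
  proof -
    have "coef (\<Sum>j<r. st (T (U j)) * T (U j)) k = 0" if "k < m" for k
      using that \<open>\<forall>k<m. (\<Sum>j<r. Qv n E (U j) k) = 0\<close> by (simp add: coef_sum coefTT)
    then have "(\<Sum>j<r. st (T (U j)) * T (U j)) \<in> plus_star st J" using coef_zero M_def by blast
    moreover have rr: "\<forall>(n::nat) a. (\<Sum>j<n. st (a j) * a j) \<in> plus_star st J \<longrightarrow> (\<forall>j<n. a j \<in> J)"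
      using rJ by (simp add: real_ideal_def)
    ultimately have "\<forall>j<r. T (U j) \<in> J" using rr[rule_format, where n=r and a="\<lambda>j. T (U j)"] by blast
    then show ?thesis using f(2) unfolding indep_def T_def by (metis lessThan_iff)
  qed
  obtain w where w: "\<forall>u. (\<exists>i<n. u i \<noteq> 0) \<longrightarrow> 0 < (\<Sum>k<m. w k * Qv n E u k)"
    using core[of m n E] realcore by blast
  define \<psi>1 where "\<psi>1 = (\<lambda>a. \<Sum>k<m. w k * coef a k)"
  define \<psi> where "\<psi> = (\<lambda>a. (\<psi>1 a + \<psi>1 (st a)) / 2)"
  have p1_add: "\<psi>1 (x + y) = \<psi>1 x + \<psi>1 y" for x y
    by (simp add: \<psi>1_def coef_add sum.distrib algebra_simps)
  have p1_sm: "\<psi>1 (smr r x) = r * \<psi>1 x" for r x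
    by (simp add: \<psi>1_def coef_sm sum_distrib_left algebra_simps)
  have p1_M: "\<psi>1 z = 0" if "z \<in> M" for z
    using that by (simp add: \<psi>1_def coef_M)
  have "\<forall>x y. \<psi> (x + y) = \<psi> x + \<psi> y" by (simp add: \<psi>_def p1_add st_add add_divide_distrib)
  moreover have "\<forall>r x. \<psi> (smr r x) = r * \<psi> x" by (simp add: \<psi>_def p1_sm st_sm algebra_simps)
  moreover have "\<forall>x. \<psi> (st x) = \<psi> x" by (simp add: \<psi>_def add.commute)
  moreover have "\<forall>x\<in>J. \<psi> x = 0"
    using JM p1_M stJ_in_plus_star[OF LJ] by (simp add: \<psi>_def M_def)
  moreover have "0 < \<psi> (st x * x)" if "x \<notin> J" for x
  proof -
    obtain c where c: "x - T c \<in> J" using f(1) unfolding spans_def T_def by (metis lessThan_def)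
    have "\<exists>i<n. c i \<noteq> 0"
    proof (rule ccontr)
      assume "\<not> ?thesis"
      then have "T c = 0" by (simp add: T_def)
      with c that show False by simp
    qed
    then have pos: "0 < (\<Sum>k<m. w k * Qv n E c k)" using w by blast
    have "st x * x - st (T c) * T c \<in> M" using sq_cong[OF LJ c] by (simp add: M_def)
    then have "\<psi>1 (st x * x) = \<psi>1 (st (T c) * T c)"
      using p1_M p1_add by (metis diff_add_cancel add_0)
    also have "\<dots> = (\<Sum>k<m. w k * Qv n E c k)" by (simp add: \<psi>1_def coefTT)
    finally have "\<psi>1 (st x * x) = (\<Sum>k<m. w k * Qv n E c k)" .
    moreover have "st (st x * x) = st x * x" by (simp add: st_mult)
    ultimately show ?thesis using pos by (simp add: \<psi>_def)
  qed
  ultimately show ?thesis by blast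
qed

lemma conj_one: "conjugate (1::'k::conjugatable_field) = 1"
proof -
  have "conjugate (1::'k) * conjugate 1 = conjugate 1" using conjugate_dist_mul[of "1::'k" 1] by simp
  moreover have "conjugate (1::'k) \<noteq> 0" by simp
  ultimately show ?thesis by (metis mult_cancel_right2)
qed

lemma conj_inverse: "conjugate (inverse (s::'k::conjugatable_field)) = inverse (conjugate s)"
proof (cases "s = 0")
  case True then show ?thesis by simp
next
  case False
  have i1: "inverse s * s = 1" using False by simp
  have "conjugate (inverse s) * conjugate s = 1"
    using conjugate_dist_mul[of "inverse s" s] conj_one i1 by metis
  then show ?thesis using False by (metis conjugate_zero_iff inverse_unique mult.commute)
qed

lemma gns:
  fixes sm :: "'k::conjugatable_ordered_field \<Rightarrow> 'a::{ring,monoid_mult} \<Rightarrow> 'a"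
  assumes sa: "star_algebra sm st"
    and sqr: "\<And>p::'k. 0 < p \<Longrightarrow> \<exists>s. 0 < s \<and> conjugate s = s \<and> s * s = p"
    and LJ: "left_ideal_of J" and sp: "salg.spans sm J D g"
    and phi_add: "\<And>x y. \<phi> (x + y) = \<phi> x + \<phi> y"
    and phi_sm: "\<And>c x. \<phi> (sm c x) = c * \<phi> x"
    and phi_st: "\<And>x. \<phi> (st x) = conjugate (\<phi> x)"
    and phi_J: "\<And>x. x \<in> J \<Longrightarrow> \<phi> x = 0"
    and phi_pos: "\<And>x. x \<notin> J \<Longrightarrow> 0 < \<phi> (st x * x)"
    and K: "two_sided_ideal_of K" "K \<subseteq> J"
  shows "\<exists>n \<pi>. fd_star_rep sm st n \<pi> \<and> K \<subseteq> rep_kernel n \<pi> \<and> rep_kernel n \<pi> \<subseteq> J"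
proof -
  interpret salg sm st by (rule salg.intro[OF sa])
  have SJ: "subsp sm J" using left_ideal_subsp[OF LJ] .
  have Jmul: "y * x \<in> J" if "x \<in> J" for x y using LJ that unfolding left_ideal_of_def by blast
  have phi0: "\<phi> 0 = 0" using phi_sm[of 0 0] by simp
  have phi_sum: "\<phi> (\<Sum>k\<in>S. h k) = (\<Sum>k\<in>S. \<phi> (h k))" for S h
    by (induction S rule: infinite_finite_induct) (auto simp: phi0 phi_add)
  have phi_minus: "\<phi> (- x) = - \<phi> x" for x using phi_add[of x "-x"] phi0 by (simp add: eq_neg_iff_add_eq_0 add.commute)
  have phi_diff: "\<phi> (x - y) = \<phi> x - \<phi> y" for x y using phi_add[of x "-y"] phi_minus by simp
  define ip where "ip = (\<lambda>b a. \<phi> (st b * a))"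
  have ip_add: "ip b (a + a') = ip b a + ip b a'" for a a' b by (simp add: ip_def distrib_left phi_add)
  have ip_diff: "ip b (a - a') = ip b a - ip b a'" for a a' b by (simp add: ip_def right_diff_distrib phi_diff)
  have ip_sm: "ip b (sm c a) = c * ip b a" for b c a by (simp add: ip_def sm_mult_right[symmetric] phi_sm)
  have ip_conj: "conjugate (ip a b) = ip b a" for a b
    by (simp add: ip_def phi_st[symmetric] st_mult)
  have ip_J: "ip b j = 0" if "j \<in> J" for b j using that Jmul phi_J by (simp add: ip_def)
  have ip_smsum: "ip v (\<Sum>k\<in>S. sm (c k) (a k)) = (\<Sum>k\<in>S. c k * ip v (a k))" for v S c a
    by (simp add: ip_def sum_distrib_left phi_sum sm_mult_right[symmetric] phi_sm)
  define proj where "proj = (\<lambda>(n::nat) b x. \<Sum>k<n. sm (ip (b k) x) (b k))"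
  define Exp where "Exp = (\<lambda>(n::nat) b x. x - proj n b x \<in> J)"
  define ON where "ON = (\<lambda>(n::nat) b. \<forall>i<n. \<forall>j<n. ip (b i) (b j) = (if i = j then 1 else 0))"
  have proj_add: "proj n b (x + y) = proj n b x + proj n b y" for n b x y
    by (simp add: proj_def ip_add sm_add_left sum.distrib)
  have proj_sm: "proj n b (sm c x) = sm c (proj n b x)" for n b c x
    by (simp add: proj_def ip_sm sm_sum sm_sm)
  have proj_J: "proj n b j = 0" if "j \<in> J" for n b j using that by (simp add: proj_def ip_J)
  have proj_sum: "proj n b (\<Sum>d\<in>S. h d) = (\<Sum>d\<in>S. proj n b (h d))" for n b S h
    by (induction S rule: infinite_finite_induct) (auto simp: proj_add proj_J SJ[unfolded subsp_def])
  have ortho: "ip v y = 0" if "\<forall>k<n. ip v (b k) = 0" "Exp n b y" for v n b y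
  proof -
    have "ip v y = ip v (y - proj n b y) + ip v (proj n b y)" by (simp add: ip_diff)
    also have "ip v (y - proj n b y) = 0" using that(2) ip_J by (simp add: Exp_def)
    also have "ip v (proj n b y) = 0" using that(1) by (simp add: proj_def ip_smsum)
    finally show ?thesis by simp
  qed
  have ip_proj: "ip (b i) (proj n b x) = ip (b i) x" if "ON n b" "i < n" for n b x i
  proof -
    have "ip (b i) (proj n b x) = (\<Sum>k<n. ip (b k) x * (if i = k then 1 else 0))"
      using that by (simp add: proj_def ip_smsum ON_def)
    also have "\<dots> = ip (b i) x" using that(2) by (simp add: if_distrib cong: if_cong)
    finally show ?thesis .
  qed
  have GS: "\<exists>n b. ON n b \<and> (\<forall>d\<in>S. Exp n b (g d))" if "finite S" for S
    using that
  proof (induction S rule: finite_induct)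
    case empty
    show ?case by (intro exI[of _ 0]) (auto simp: ON_def)
  next
    case (insert d0 S)
    then obtain n b where nb: "ON n b" "\<forall>d\<in>S. Exp n b (g d)" by blast
    define x where "x = g d0"
    define r where "r = x - proj n b x"
    show ?case
    proof (cases "r \<in> J")
      case True
      then show ?thesis using nb by (intro exI[of _ n] exI[of _ b]) (auto simp: Exp_def r_def x_def)
    next
      case False
      obtain s where s: "0 < s" "conjugate s = s" "s * s = \<phi> (st r * r)"
        using sqr[OF phi_pos[OF False]] by blast
      have s0: "s \<noteq> 0" using s(1) by simp
      define v where "v = sm (inverse s) r"
      define b' where "b' = b(n := v)"
      have rperp: "ip (b k) r = 0" if "k < n" for k
        using ip_proj[OF nb(1) that] by (simp add: r_def ip_diff)
      have vperp: "ip (b k) v = 0" if "k < n" for k using rperp[OF that] by (simp add: v_def ip_sm)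
      have vperp': "ip v (b k) = 0" if "k < n" for k using vperp[OF that] ip_conj[of "b k" v] by simp
      have ipvr: "ip v r = s"
      proof -
        have e1: "ip r v = inverse s * ip r r" by (simp add: v_def ip_sm)
        have e2: "ip r r = s * s" using s(3) by (simp add: ip_def)
        have e3: "inverse s * (s * s) = s" using s0 by (simp add: mult.assoc[symmetric])
        show ?thesis using e1 e2 e3 s(2) ip_conj[of r v] by simp
      qed
      have ipvv: "ip v v = 1"
        using ipvr s0 by (simp add: v_def ip_sm)
      have ON': "ON (Suc n) b'"
        unfolding ON_def
      proof (intro allI impI)
        fix i j assume ij: "i < Suc n" "j < Suc n"
        show "ip (b' i) (b' j) = (if i = j then 1 else 0)"
          using ij nb(1) vperp vperp' ipvv unfolding ON_def b'_def
          by (cases "i = n"; cases "j = n") auto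
      qed
      have projS: "proj (Suc n) b' y = proj n b y + sm (ip v y) v" for y
        by (simp add: proj_def b'_def)
      have "Exp (Suc n) b' (g d)" if "d \<in> S" for d
      proof -
        have "ip v (g d) = 0" using ortho[of n v b "g d"] vperp' nb(2) that by blast
        then show ?thesis using nb(2) that by (simp add: Exp_def projS)
      qed
      moreover have "Exp (Suc n) b' x"
      proof -
        have "ip v x = ip v r + ip v (proj n b x)" by (simp add: r_def ip_diff)
        also have "ip v (proj n b x) = 0" using vperp' by (simp add: proj_def ip_smsum)
        finally have "ip v x = s" using ipvr by simp
        then have "x - proj (Suc n) b' x = r - sm s (sm (inverse s) r)"
          by (simp add: projS r_def v_def)
        also have "\<dots> = 0" using s0 by (simp add: sm_sm)
        finally show ?thesis using SJ by (simp add: Exp_def subsp_def)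
      qed
      ultimately show ?thesis using ON' x_def by (intro exI[of _ "Suc n"] exI[of _ b']) auto
    qed
  qed
  have finD: "finite D" using sp by (simp add: spans_def)
  obtain n b where nb: "ON n b" "\<forall>d\<in>D. Exp n b (g d)" using GS[OF finD] by blast
  have ExpAll: "Exp n b a" for a
  proof -
    obtain c where c: "a - (\<Sum>d\<in>D. sm (c d) (g d)) \<in> J" using sp unfolding spans_def by blast
    define z where "z = a - (\<Sum>d\<in>D. sm (c d) (g d))"
    have zJ: "z \<in> J" using c by (simp add: z_def)
    have a_eq: "a = z + (\<Sum>d\<in>D. sm (c d) (g d))" by (simp add: z_def)
    have pa: "proj n b a = (\<Sum>d\<in>D. sm (c d) (proj n b (g d)))"
      by (subst a_eq) (simp add: proj_add proj_J[OF zJ] proj_sum proj_sm)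
    have "a - proj n b a = z + (\<Sum>d\<in>D. sm (c d) (g d - proj n b (g d)))"
      by (subst (1) a_eq) (simp add: pa sm_diff sum_subtractf)
    moreover have "(\<Sum>d\<in>D. sm (c d) (g d - proj n b (g d))) \<in> J"
      using nb(2) SJ by (intro subsp_sum) (auto simp: Exp_def subsp_def)
    ultimately show ?thesis using c SJ unfolding Exp_def subsp_def z_def by metis
  qed
  define \<pi> where "\<pi> = (\<lambda>a. mat n n (\<lambda>(i,j). ip (b i) (a * b j)))"
  have entry: "\<pi> a $$ (i,j) = ip (b i) (a * b j)" if "i < n" "j < n" for a i j
    using that by (simp add: \<pi>_def)
  have dims[simp]: "dim_row (\<pi> a) = n" "dim_col (\<pi> a) = n" for a by (simp_all add: \<pi>_def)
  have rep: "fd_star_rep sm st n \<pi>"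
    unfolding fd_star_rep_def
  proof (intro conjI allI)
    show "\<pi> a \<in> carrier_mat n n" for a by (simp add: \<pi>_def)
    show "\<pi> 1 = 1\<^sub>m n" using nb(1) by (intro eq_matI) (auto simp: entry ON_def)
    show "\<pi> (a + c) = \<pi> a + \<pi> c" for a c by (intro eq_matI) (auto simp: entry distrib_right ip_add)
    show "\<pi> (sm c a) = c \<cdot>\<^sub>m \<pi> a" for c a
      by (intro eq_matI) (auto simp: entry sm_mult_left[symmetric] ip_sm)
    show "\<pi> (a * c) = \<pi> a * \<pi> c" for a c
    proof (intro eq_matI)
      fix i j assume ij: "i < dim_row (\<pi> a * \<pi> c)" "j < dim_col (\<pi> a * \<pi> c)"
      then have ij': "i < n" "j < n" by auto
      have "(\<pi> a * \<pi> c) $$ (i,j) = (\<Sum>k<n. ip (b i) (a * b k) * ip (b k) (c * b j))"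
        using ij' by (simp add: scalar_prod_def entry atLeast0LessThan)
      also have "\<dots> = ip (b i) (a * (c * b j))"
      proof -
        have "c * b j - proj n b (c * b j) \<in> J" using ExpAll unfolding Exp_def by blast
        then have "ip (b i) (a * (c * b j - proj n b (c * b j))) = 0" using ip_J Jmul by blast
        then have "ip (b i) (a * (c * b j)) = ip (b i) (a * proj n b (c * b j))"
          by (simp add: right_diff_distrib ip_diff)
        also have "a * proj n b (c * b j) = (\<Sum>k<n. sm (ip (b k) (c * b j)) (a * b k))"
          by (simp add: proj_def sum_distrib_left sm_mult_right)
        also have "ip (b i) \<dots> = (\<Sum>k<n. ip (b k) (c * b j) * ip (b i) (a * b k))"
          by (simp add: ip_smsum)
        finally show ?thesis by (simp add: mult.commute)
      qed
      also have "\<dots> = \<pi> (a * c) $$ (i,j)" using ij' by (simp add: entry mult.assoc)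
      finally show "\<pi> (a * c) $$ (i,j) = (\<pi> a * \<pi> c) $$ (i,j)" by simp
    qed auto
    show "\<pi> (st a) = adj_mat (\<pi> a)" for a
    proof (intro eq_matI)
      fix i j assume ij: "i < dim_row (adj_mat (\<pi> a))" "j < dim_col (adj_mat (\<pi> a))"
      then have ij': "i < n" "j < n" by (auto simp: adj_mat_def)
      have "adj_mat (\<pi> a) $$ (i,j) = conjugate (ip (b j) (a * b i))"
        using ij' by (simp add: adj_mat_def entry)
      also have "\<dots> = \<phi> (st (st (b j) * (a * b i)))" by (simp add: ip_def phi_st)
      also have "\<dots> = ip (b i) (st a * b j)" by (simp add: ip_def st_mult mult.assoc)
      finally show "\<pi> (st a) $$ (i,j) = adj_mat (\<pi> a) $$ (i,j)" using ij' by (simp add: entry)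
    qed (auto simp: adj_mat_def)
  qed
  have "K \<subseteq> rep_kernel n \<pi>"
  proof
    fix a assume a: "a \<in> K"
    have "a * b j \<in> J" for j using a K unfolding two_sided_ideal_of_def by blast
    then have "\<pi> a = 0\<^sub>m n n" by (intro eq_matI) (auto simp: entry ip_J)
    then show "a \<in> rep_kernel n \<pi>" by (simp add: rep_kernel_def)
  qed
  moreover have "rep_kernel n \<pi> \<subseteq> J"
  proof
    fix a assume "a \<in> rep_kernel n \<pi>"
    then have z: "\<pi> a = 0\<^sub>m n n" by (simp add: rep_kernel_def)
    have abJ: "a * b k \<in> J" if "k < n" for k
    proof -
      have "proj n b (a * b k) = 0"
        unfolding proj_def using z that
        by (auto intro!: sum.neutral simp: entry[symmetric])
      then show ?thesis using ExpAll[of "a * b k"] by (simp add: Exp_def)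
    qed
    have "1 - proj n b 1 \<in> J" using ExpAll unfolding Exp_def by blast
    then have "a * (1 - proj n b 1) \<in> J" using Jmul by blast
    moreover have "a * proj n b 1 \<in> J"
      unfolding proj_def sum_distrib_left using abJ SJ
      by (intro subsp_sum) (auto simp: sm_mult_right[symmetric] subsp_def)
    ultimately have "a * (1 - proj n b 1) + a * proj n b 1 \<in> J" using SJ by (simp add: subsp_def)
    then show "a \<in> J" by (simp add: right_diff_distrib)
  qed
  ultimately show ?thesis using rep by blast
qed

lemma fin_coords:
  fixes sm :: "'k::conjugatable_field \<Rightarrow> 'a::{ring,monoid_mult} \<Rightarrow> 'a" and F :: "'i \<Rightarrow> 'a \<Rightarrow> 'k"
  assumes sa: "star_algebra sm st"
    and Fadd: "\<And>i x y. F i (x + y) = F i x + F i y"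
    and Fsm: "\<And>i c x. F i (sm c x) = c * F i x"
    and fin: "finite I" and X: "subsp sm X"
  shows "\<exists>B. finite B \<and> B \<subseteq> X \<and> (\<forall>a\<in>X. \<exists>c. \<forall>i\<in>I. F i a = (\<Sum>b\<in>B. c b * F i b))"
  using fin X
proof (induction I arbitrary: X rule: finite_induct)
  case empty
  then show ?case by (intro exI[of _ "{}"]) auto
next
  case (insert p I)
  interpret salg sm st by (rule salg.intro[OF sa])
  show ?case
  proof (cases "\<forall>a\<in>X. F p a = 0")
    case True
    have "\<exists>B. finite B \<and> B \<subseteq> X \<and> (\<forall>a\<in>X. \<exists>c. \<forall>i\<in>I. F i a = (\<Sum>b\<in>B. c b * F i b))"
      by (rule insert.IH[OF insert.prems])
    then obtain B where B: "finite B" "B \<subseteq> X" "\<forall>a\<in>X. \<exists>c. \<forall>i\<in>I. F i a = (\<Sum>b\<in>B. c b * F i b)"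
      by blast
    have "\<forall>a\<in>X. \<exists>c. \<forall>i\<in>insert p I. F i a = (\<Sum>b\<in>B. c b * F i b)"
    proof
      fix a assume a: "a \<in> X"
      obtain c where c: "\<forall>i\<in>I. F i a = (\<Sum>b\<in>B. c b * F i b)" using B(3) a by blast
      have "(\<Sum>b\<in>B. c b * F p b) = 0" using True B(2) by (intro sum.neutral) auto
      then have "F p a = (\<Sum>b\<in>B. c b * F p b)" using True a by simp
      then show "\<exists>c. \<forall>i\<in>insert p I. F i a = (\<Sum>b\<in>B. c b * F i b)" using c by auto
    qed
    then show ?thesis using B by blast
  next
    case False
    then obtain x0 where x0: "x0 \<in> X" "F p x0 \<noteq> 0" by blast
    define X' where "X' = {a\<in>X. F p a = 0}"
    have F0: "F i 0 = 0" for i using Fsm[of i 0 0] by simp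
    have sX': "subsp sm X'" using insert.prems unfolding subsp_def X'_def by (auto simp: Fadd Fsm F0)
    have "\<exists>B. finite B \<and> B \<subseteq> X' \<and> (\<forall>a\<in>X'. \<exists>c. \<forall>i\<in>I. F i a = (\<Sum>b\<in>B. c b * F i b))"
      by (rule insert.IH[OF sX'])
    then obtain B where B: "finite B" "B \<subseteq> X'" "\<forall>a\<in>X'. \<exists>c. \<forall>i\<in>I. F i a = (\<Sum>b\<in>B. c b * F i b)"
      by blast
    have x0B: "x0 \<notin> B" using B(2) x0 by (auto simp: X'_def)
    have "\<forall>a\<in>X. \<exists>c. \<forall>i\<in>insert p I. F i a = (\<Sum>b\<in>insert x0 B. c b * F i b)"
    proof
      fix a assume a: "a \<in> X"
      define lam where "lam = F p a / F p x0"
      define a' where "a' = a - sm lam x0"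
      have Fa': "F i a' = F i a - lam * F i x0" for i
      proof -
        have "F i a = F i (a' + sm lam x0)" by (simp add: a'_def)
        then show ?thesis by (simp add: Fadd Fsm)
      qed
      have "sm lam x0 \<in> X" using x0 insert.prems unfolding subsp_def by blast
      then have "a' \<in> X" using a insert.prems subsp_diff[of X a "sm lam x0"] by (simp add: a'_def)
      moreover have "F p a' = 0" using Fa'[of p] x0 by (simp add: lam_def)
      ultimately have "a' \<in> X'" by (simp add: X'_def)
      then obtain c where c: "\<forall>i\<in>I. F i a' = (\<Sum>b\<in>B. c b * F i b)" using B(3) by blast
      define c' where "c' = c(x0 := lam)"
      have sB: "(\<Sum>b\<in>B. c' b * F i b) = (\<Sum>b\<in>B. c b * F i b)" for i
        using x0B by (intro sum.cong refl) (auto simp: c'_def)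
      have ins: "(\<Sum>b\<in>insert x0 B. c' b * F i b) = lam * F i x0 + (\<Sum>b\<in>B. c b * F i b)" for i
      proof -
        have "(\<Sum>b\<in>insert x0 B. c' b * F i b) = c' x0 * F i x0 + (\<Sum>b\<in>B. c' b * F i b)"
          using x0B B(1) by simp
        also have "\<dots> = lam * F i x0 + (\<Sum>b\<in>B. c b * F i b)"
          by (simp only: sB) (simp add: c'_def)
        finally show ?thesis .
      qed
      have "F i a = (\<Sum>b\<in>insert x0 B. c' b * F i b)" if "i \<in> insert p I" for i
      proof (cases "i = p")
        case True
        have "(\<Sum>b\<in>B. c b * F p b) = 0" using B(2) by (auto intro!: sum.neutral simp: X'_def)
        then show ?thesis using True x0 by (simp add: ins lam_def)
      next
        case False
        then have "i \<in> I" using that by simp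
        then show ?thesis using c Fa'[of i] by (simp add: ins)
      qed
      then show "\<exists>c. \<forall>i\<in>insert p I. F i a = (\<Sum>b\<in>insert x0 B. c b * F i b)" by blast
    qed
    moreover have "insert x0 B \<subseteq> X" using B(2) x0 by (auto simp: X'_def)
    ultimately show ?thesis using B(1) by blast
  qed
qed

context
  fixes sm :: "'k::conjugatable_ordered_field \<Rightarrow> 'a::{ring,monoid_mult} \<Rightarrow> 'a" and st n \<pi>
  assumes sa: "star_algebra sm st" and rep: "fd_star_rep sm st n \<pi>"
begin

interpretation salg sm st by (rule salg.intro[OF sa])

lemma rep_props:
  "\<pi> a \<in> carrier_mat n n" "\<pi> (a + b) = \<pi> a + \<pi> b" "\<pi> (sm c a) = c \<cdot>\<^sub>m \<pi> a"
  "\<pi> (a * b) = \<pi> a * \<pi> b" "\<pi> (st a) = adj_mat (\<pi> a)"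
  using rep unfolding fd_star_rep_def by auto

lemma rep_dims[simp]: "dim_row (\<pi> a) = n" "dim_col (\<pi> a) = n"
  using rep_props(1)[of a] by auto

lemma E_add: "i < n \<Longrightarrow> j < n \<Longrightarrow> \<pi> (a + b) $$ (i,j) = \<pi> a $$ (i,j) + \<pi> b $$ (i,j)"
  by (simp add: rep_props(2))
lemma E_sm: "i < n \<Longrightarrow> j < n \<Longrightarrow> \<pi> (sm c a) $$ (i,j) = c * \<pi> a $$ (i,j)"
  by (simp add: rep_props(3))
lemma E_mult: "i < n \<Longrightarrow> j < n \<Longrightarrow> \<pi> (a * b) $$ (i,j) = (\<Sum>k<n. \<pi> a $$ (i,k) * \<pi> b $$ (k,j))"
  by (simp add: rep_props(4) scalar_prod_def atLeast0LessThan)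
lemma E_st: "i < n \<Longrightarrow> j < n \<Longrightarrow> \<pi> (st a) $$ (i,j) = conjugate (\<pi> a $$ (j,i))"
  by (simp add: rep_props(5) adj_mat_def)
lemma E_zero: "i < n \<Longrightarrow> j < n \<Longrightarrow> \<pi> 0 $$ (i,j) = 0"
  using E_sm[of i j 0 0] by simp
lemma E_diff: "i < n \<Longrightarrow> j < n \<Longrightarrow> \<pi> (a - b) $$ (i,j) = \<pi> a $$ (i,j) - \<pi> b $$ (i,j)"
proof -
  assume ij: "i < n" "j < n"
  have m: "sm (-1) b = - b" using sm_minus_left[of 1 b] by simp
  have "a - b = a + sm (-1) b" by (simp only: m diff_conv_add_uminus)
  then have "\<pi> (a - b) $$ (i,j) = \<pi> (a + sm (-1) b) $$ (i,j)" by metis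
  also have "\<dots> = \<pi> a $$ (i,j) - \<pi> b $$ (i,j)" using ij by (simp only: E_add E_sm) simp
  finally show ?thesis .
qed
lemma E_sum: "i < n \<Longrightarrow> j < n \<Longrightarrow> \<pi> (\<Sum>b\<in>B. h b) $$ (i,j) = (\<Sum>b\<in>B. \<pi> (h b) $$ (i,j))"
  by (induction B rule: infinite_finite_induct) (auto simp: E_zero E_add)

lemma ker_iff: "a \<in> rep_kernel n \<pi> \<longleftrightarrow> (\<forall>i<n. \<forall>j<n. \<pi> a $$ (i,j) = 0)"
proof
  assume "a \<in> rep_kernel n \<pi>"
  then show "\<forall>i<n. \<forall>j<n. \<pi> a $$ (i,j) = 0" by (simp add: rep_kernel_def)
next
  assume "\<forall>i<n. \<forall>j<n. \<pi> a $$ (i,j) = 0"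
  then have "\<pi> a = 0\<^sub>m n n" by (intro eq_matI) auto
  then show "a \<in> rep_kernel n \<pi>" by (simp add: rep_kernel_def)
qed

lemma ker_left: "left_ideal_of (rep_kernel n \<pi>)"
  unfolding left_ideal_of_def by (auto simp: ker_iff E_zero E_add E_mult)

lemma ker_real: "real_ideal st (rep_kernel n \<pi>)"
  unfolding real_ideal_def
proof (intro conjI ker_left allI impI)
  fix r :: nat and a :: "nat \<Rightarrow> 'a" and j0
  assume "(\<Sum>j<r. st (a j) * a j) \<in> plus_star st (rep_kernel n \<pi>)" and j0: "j0 < r"
  then obtain x y where xy: "(\<Sum>j<r. st (a j) * a j) = x + st y" "x \<in> rep_kernel n \<pi>" "y \<in> rep_kernel n \<pi>"
    unfolding plus_star_def by blast
  define tr where "tr = (\<lambda>z. \<Sum>l<n. \<pi> z $$ (l,l))"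
  have "tr (x + st y) = 0" using xy(2,3) unfolding ker_iff tr_def by (simp add: E_add E_st)
  moreover have "tr (\<Sum>j<r. st (a j) * a j) = (\<Sum>j<r. \<Sum>l<n. \<Sum>k<n. conjugate (\<pi> (a j) $$ (k,l)) * \<pi> (a j) $$ (k,l))"
    unfolding tr_def by (simp add: E_sum E_mult E_st) (rule sum.swap)
  ultimately have z: "(\<Sum>j<r. \<Sum>l<n. \<Sum>k<n. conjugate (\<pi> (a j) $$ (k,l)) * \<pi> (a j) $$ (k,l)) = 0"
    using xy(1) by simp
  have nn: "0 \<le> conjugate z * z" for z :: 'k
    using conjugate_square_positive[of z] by (simp add: mult.commute)
  have "\<forall>j<r. \<forall>l<n. \<forall>k<n. conjugate (\<pi> (a j) $$ (k,l)) * \<pi> (a j) $$ (k,l) = 0"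
    using z nn by (simp add: sum_nonneg_eq_0_iff sum_nonneg)
  then have "\<forall>j<r. \<forall>l<n. \<forall>k<n. \<pi> (a j) $$ (k,l) = 0" by simp
  then show "a j0 \<in> rep_kernel n \<pi>" unfolding ker_iff using j0 by blast
qed

lemma ker_fin: "fin_codim sm (rep_kernel n \<pi>)"
proof -
  have X: "subsp sm UNIV" by (simp add: subsp_def)
  have Fa: "\<pi> (x + y) $$ p = \<pi> x $$ p + \<pi> y $$ p" if "p \<in> {..<n}\<times>{..<n}" for p x y
    using that E_add by auto
  have Fs: "\<pi> (sm c x) $$ p = c * \<pi> x $$ p" if "p \<in> {..<n}\<times>{..<n}" for p c x
    using that E_sm by auto
  define F where "F = (\<lambda>p a. if p \<in> {..<n}\<times>{..<n} then \<pi> a $$ p else (0::'k))"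
  have F1: "F p (x + y) = F p x + F p y" for p x y by (auto simp: F_def Fa)
  have F2: "F p (sm c x) = c * F p x" for p c x by (auto simp: F_def Fs)
  have "\<exists>B. finite B \<and> B \<subseteq> UNIV \<and> (\<forall>a\<in>UNIV. \<exists>c. \<forall>p\<in>{..<n}\<times>{..<n}. F p a = (\<Sum>b\<in>B. c b * F p b))"
    by (rule fin_coords[OF sa F1 F2 _ X]) simp
  then obtain B where B0: "finite B" "\<forall>a. \<exists>c. \<forall>p\<in>{..<n}\<times>{..<n}. F p a = (\<Sum>b\<in>B. c b * F p b)"
    by blast
  have allc: "\<exists>c. a - (\<Sum>b\<in>B. sm (c b) b) \<in> rep_kernel n \<pi>" for a
  proof -
    obtain c where c0: "\<forall>p\<in>{..<n}\<times>{..<n}. F p a = (\<Sum>b\<in>B. c b * F p b)" using B0(2) by blast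
    have "\<pi> (a - (\<Sum>b\<in>B. sm (c b) b)) $$ (i,j) = 0" if ij: "i < n" "j < n" for i j
    proof -
      have "\<pi> (a - (\<Sum>b\<in>B. sm (c b) b)) $$ (i,j) = \<pi> a $$ (i,j) - (\<Sum>b\<in>B. c b * \<pi> b $$ (i,j))"
        using ij by (simp add: E_diff E_sum E_sm)
      moreover have "F (i,j) a = (\<Sum>b\<in>B. c b * F (i,j) b)" using c0 ij by blast
      then have "\<pi> a $$ (i,j) = (\<Sum>b\<in>B. c b * \<pi> b $$ (i,j))" using ij by (simp add: F_def)
      ultimately show ?thesis by simp
    qed
    then have "a - (\<Sum>b\<in>B. sm (c b) b) \<in> rep_kernel n \<pi>"
      unfolding ker_iff by blast
    then show ?thesis by blast
  qed
  show ?thesis unfolding fin_codim_def by (rule exI[of _ B], rule conjI[OF B0(1)], rule allI, rule allc)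
qed

end

lemma rr_props:
  fixes st :: "'a::{ring,monoid_mult} \<Rightarrow> 'a"
  shows "real_ideal st (real_radical st I)" "I \<subseteq> real_radical st I"
    "real_ideal st J \<Longrightarrow> I \<subseteq> J \<Longrightarrow> real_radical st I \<subseteq> J"
proof -
  define Fam where "Fam = {J. real_ideal st J \<and> I \<subseteq> J}"
  have R: "real_radical st I = \<Inter>Fam" by (simp add: real_radical_def Fam_def)
  have li: "left_ideal_of (\<Inter>Fam)"
    unfolding left_ideal_of_def
  proof (intro conjI ballI allI)
    show "0 \<in> \<Inter>Fam" by (auto simp: Fam_def real_ideal_def left_ideal_of_def)
    show "x + y \<in> \<Inter>Fam" if "x \<in> \<Inter>Fam" "y \<in> \<Inter>Fam" for x y
      using that by (auto simp: Fam_def real_ideal_def left_ideal_of_def)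
    show "a * x \<in> \<Inter>Fam" if "x \<in> \<Inter>Fam" for a x
      using that by (auto simp: Fam_def real_ideal_def left_ideal_of_def)
  qed
  have "real_ideal st (\<Inter>Fam)"
    unfolding real_ideal_def
  proof (intro conjI li allI impI)
    fix r :: nat and a :: "nat \<Rightarrow> 'a" and j
    assume s: "(\<Sum>j<r. st (a j) * a j) \<in> plus_star st (\<Inter>Fam)" and j: "j < r"
    show "a j \<in> \<Inter>Fam"
    proof
      fix J assume J: "J \<in> Fam"
      have "plus_star st (\<Inter>Fam) \<subseteq> plus_star st J"
        using J unfolding plus_star_def by blast
      then have "(\<Sum>j<r. st (a j) * a j) \<in> plus_star st J" using s by blast
      then show "a j \<in> J" using J j unfolding Fam_def real_ideal_def by blast
    qed
  qed
  then show "real_ideal st (real_radical st I)" using R by simp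
  show "I \<subseteq> real_radical st I" unfolding R Fam_def by blast
  show "real_ideal st J \<Longrightarrow> I \<subseteq> J \<Longrightarrow> real_radical st I \<subseteq> J" unfolding R Fam_def by blast
qed

lemma main_generic:
  fixes sm :: "'k::conjugatable_ordered_field \<Rightarrow> 'a::{ring,monoid_mult} \<Rightarrow> 'a"
  assumes sa: "star_algebra sm st"
    and sqr: "\<And>p::'k. 0 < p \<Longrightarrow> \<exists>s. 0 < s \<and> conjugate s = s \<and> s * s = p"
    and PHI: "\<And>J. real_ideal st J \<Longrightarrow> fin_codim sm J \<Longrightarrow> \<exists>\<phi>. (\<forall>x y. \<phi> (x + y) = \<phi> x + \<phi> y)
        \<and> (\<forall>c x. \<phi> (sm c x) = c * \<phi> x) \<and> (\<forall>x. \<phi> (st x) = conjugate (\<phi> x))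
        \<and> (\<forall>x\<in>J. \<phi> x = 0) \<and> (\<forall>x. x \<notin> J \<longrightarrow> 0 < \<phi> (st x * x))"
  shows "(\<forall>I. star_ideal st I \<longrightarrow>
         ((real_ideal st I \<and> fin_codim sm I) \<longleftrightarrow>
          (\<exists>n \<pi>. fd_star_rep sm st n \<pi> \<and> I = rep_kernel n \<pi>))) \<and>
      (\<forall>I. star_ideal st I \<and> fin_codim sm (real_radical st I) \<longrightarrow>
         Pi_hard_radical sm st I = real_radical st I)"
proof -
  have G: "\<exists>n \<pi>. fd_star_rep sm st n \<pi> \<and> K \<subseteq> rep_kernel n \<pi> \<and> rep_kernel n \<pi> \<subseteq> J"
    if rJ: "real_ideal st J" and fc: "fin_codim sm J" and K: "two_sided_ideal_of K" "K \<subseteq> J" for J K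
  proof -
    obtain \<phi> where \<phi>: "\<forall>x y. \<phi> (x + y) = \<phi> x + \<phi> y" "\<forall>c x. \<phi> (sm c x) = c * \<phi> x"
      "\<forall>x. \<phi> (st x) = conjugate (\<phi> x)" "\<forall>x\<in>J. \<phi> x = 0" "\<forall>x. x \<notin> J \<longrightarrow> 0 < \<phi> (st x * x)"
      using PHI[OF rJ fc] by blast
    obtain B where B: "finite B" "\<forall>a. \<exists>c. a - (\<Sum>b\<in>B. sm (c b) b) \<in> J"
      using fc unfolding fin_codim_def by blast
    interpret salg sm st by (rule salg.intro[OF sa])
    have sp: "spans J B id" using B by (simp add: spans_def)
    have LJ: "left_ideal_of J" using rJ by (simp add: real_ideal_def)
    have p1: "\<And>x y. \<phi> (x + y) = \<phi> x + \<phi> y" using \<phi>(1) by blast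
    have p2: "\<And>c x. \<phi> (sm c x) = c * \<phi> x" using \<phi>(2) by blast
    have p3: "\<And>x. \<phi> (st x) = conjugate (\<phi> x)" using \<phi>(3) by blast
    have p4: "\<And>x. x \<in> J \<Longrightarrow> \<phi> x = 0" using \<phi>(4) by blast
    have p5: "\<And>x. x \<notin> J \<Longrightarrow> 0 < \<phi> (st x * x)" using \<phi>(5) by blast
    show ?thesis
      by (rule gns[OF sa sqr LJ sp p1 p2 p3 p4 p5 K])
  qed
  have P1: "(real_ideal st I \<and> fin_codim sm I) \<longleftrightarrow> (\<exists>n \<pi>. fd_star_rep sm st n \<pi> \<and> I = rep_kernel n \<pi>)"
    if sI: "star_ideal st I" for I
  proof
    assume "real_ideal st I \<and> fin_codim sm I"
    moreover have "two_sided_ideal_of I" using sI by (simp add: star_ideal_def)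
    ultimately obtain n \<pi> where "fd_star_rep sm st n \<pi>" "I \<subseteq> rep_kernel n \<pi>" "rep_kernel n \<pi> \<subseteq> I"
      using G[of I I] by blast
    then show "\<exists>n \<pi>. fd_star_rep sm st n \<pi> \<and> I = rep_kernel n \<pi>" by blast
  next
    assume "\<exists>n \<pi>. fd_star_rep sm st n \<pi> \<and> I = rep_kernel n \<pi>"
    then obtain n \<pi> where "fd_star_rep sm st n \<pi>" "I = rep_kernel n \<pi>" by blast
    then show "real_ideal st I \<and> fin_codim sm I" using ker_real[OF sa] ker_fin[OF sa] by simp
  qed
  have P2: "Pi_hard_radical sm st I = real_radical st I"
    if sI: "star_ideal st I" and fc: "fin_codim sm (real_radical st I)" for I
  proof
    have tI: "two_sided_ideal_of I" using sI by (simp add: star_ideal_def)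
    obtain n \<pi> where np: "fd_star_rep sm st n \<pi>" "I \<subseteq> rep_kernel n \<pi>" "rep_kernel n \<pi> \<subseteq> real_radical st I"
      using G[OF rr_props(1) fc tI rr_props(2)] by blast
    have V: "V_hard_Pi sm st I n \<pi>" using np by (auto simp: V_hard_Pi_def rep_kernel_def)
    show "Pi_hard_radical sm st I \<subseteq> real_radical st I"
    proof
      fix a assume "a \<in> Pi_hard_radical sm st I"
      then have "\<pi> a = 0\<^sub>m n n" using V by (simp add: Pi_hard_radical_def I_hard_Pi_def)
      then show "a \<in> real_radical st I" using np(3) by (auto simp: rep_kernel_def)
    qed
    show "real_radical st I \<subseteq> Pi_hard_radical sm st I"
    proof
      fix a assume a: "a \<in> real_radical st I"
      show "a \<in> Pi_hard_radical sm st I"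
        unfolding Pi_hard_radical_def I_hard_Pi_def
      proof (intro CollectI allI impI)
        fix m \<rho> assume Vr: "V_hard_Pi sm st I m \<rho>"
        then have rho: "fd_star_rep sm st m \<rho>" "I \<subseteq> rep_kernel m \<rho>"
          by (auto simp: V_hard_Pi_def rep_kernel_def)
        have "real_radical st I \<subseteq> rep_kernel m \<rho>"
          by (rule rr_props(3)[OF ker_real[OF sa rho(1)] rho(2)])
        then show "\<rho> a = 0\<^sub>m m m" using a by (auto simp: rep_kernel_def)
      qed
    qed
  qed
  show ?thesis using P1 P2 by blast
qed

lemma sqr_real: "0 < (p::real) \<Longrightarrow> \<exists>s. 0 < s \<and> conjugate s = s \<and> s * s = p"
  by (intro exI[of _ "sqrt p"]) auto

lemma sqr_complex: "0 < (p::complex) \<Longrightarrow> \<exists>s. 0 < s \<and> conjugate s = s \<and> s * s = p"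
proof -
  assume "0 < p"
  then have p: "0 < Re p" "Im p = 0" by (auto simp: less_complex_def)
  define s where "s = complex_of_real (sqrt (Re p))"
  have "0 < s" using p by (simp add: s_def less_complex_def)
  moreover have "conjugate s = s" by (simp add: s_def)
  moreover have "s * s = p" using p by (intro complex_eqI) (simp_all add: s_def)
  ultimately show ?thesis by blast
qed

lemma PHI_real:
  fixes sm :: "real \<Rightarrow> 'a::{ring,monoid_mult} \<Rightarrow> 'a"
  assumes sa: "star_algebra sm st" and rJ: "real_ideal st J" and fc: "fin_codim sm J"
  shows "\<exists>\<phi>. (\<forall>x y. \<phi> (x + y) = \<phi> x + \<phi> y)
        \<and> (\<forall>c x. \<phi> (sm c x) = c * \<phi> x) \<and> (\<forall>x. \<phi> (st x) = conjugate (\<phi> x))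
        \<and> (\<forall>x\<in>J. \<phi> x = 0) \<and> (\<forall>x. x \<notin> J \<longrightarrow> 0 < \<phi> (st x * x))"
proof -
  interpret salg sm st by (rule salg.intro[OF sa])
  obtain B where B: "finite B" "\<forall>a. \<exists>c. a - (\<Sum>b\<in>B. sm (c b) b) \<in> J"
    using fc unfolding fin_codim_def by blast
  have sp: "spans J B id" using B by (simp add: spans_def)
  show ?thesis using psi_exists[OF sa rJ sp] by simp
qed

lemma PHI_complex:
  fixes sm :: "complex \<Rightarrow> 'a::{ring,monoid_mult} \<Rightarrow> 'a"
  assumes sa: "star_algebra sm st" and rJ: "real_ideal st J" and fc: "fin_codim sm J"
  shows "\<exists>\<phi>. (\<forall>x y. \<phi> (x + y) = \<phi> x + \<phi> y)
        \<and> (\<forall>c x. \<phi> (sm c x) = c * \<phi> x) \<and> (\<forall>x. \<phi> (st x) = conjugate (\<phi> x))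
        \<and> (\<forall>x\<in>J. \<phi> x = 0) \<and> (\<forall>x. x \<notin> J \<longrightarrow> 0 < \<phi> (st x * x))"
proof -
  interpret C: salg sm st by (rule salg.intro[OF sa])
  define smr where "smr = (\<lambda>r::real. \<lambda>x. sm (complex_of_real r) x)"
  have saR: "star_algebra smr st"
    unfolding star_algebra_def smr_def
    by (simp add: C.sm_add C.sm_add_left C.sm_sm C.sm_mult_left[symmetric] C.sm_mult_right[symmetric]
        C.st_add C.st_sm C.st_mult)
  interpret R: salg smr st by (rule salg.intro[OF saR])
  have LJ: "left_ideal_of J" using rJ by (simp add: real_ideal_def)
  have decomp: "sm z x = smr (Re z) x + smr (Im z) (sm \<i> x)" for z x
  proof -
    have "smr (Re z) x + smr (Im z) (sm \<i> x) = sm (complex_of_real (Re z) + complex_of_real (Im z) * \<i>) x"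
      by (simp add: smr_def C.sm_sm C.sm_add_left)
    also have "complex_of_real (Re z) + complex_of_real (Im z) * \<i> = z" by (simp add: complex_eq_iff)
    finally show ?thesis by simp
  qed
  obtain B where B: "finite B" "\<forall>a. \<exists>c. a - (\<Sum>b\<in>B. sm (c b) b) \<in> J"
    using fc unfolding fin_codim_def by blast
  define g where "g = (\<lambda>(b, t::bool). if t then sm \<i> b else b)"
  have sp: "R.spans J (B \<times> UNIV) g"
    unfolding R.spans_def
  proof (intro conjI allI)
    show "finite (B \<times> (UNIV :: bool set))" using B(1) by simp
    fix a
    obtain c where c: "a - (\<Sum>b\<in>B. sm (c b) b) \<in> J" using B(2) by blast
    define c' where "c' = (\<lambda>(b, t::bool). if t then Im (c b) else Re (c b))"
    have "(\<Sum>p\<in>B \<times> UNIV. smr (c' p) (g p)) = (\<Sum>b\<in>B. \<Sum>t\<in>UNIV. smr (c' (b,t)) (g (b,t)))"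
      by (simp add: sum.cartesian_product)
    also have "\<dots> = (\<Sum>b\<in>B. smr (Re (c b)) b + smr (Im (c b)) (sm \<i> b))"
      by (simp add: UNIV_bool c'_def g_def add.commute)
    also have "\<dots> = (\<Sum>b\<in>B. sm (c b) b)" by (intro sum.cong refl) (rule decomp[symmetric])
    finally have "a - (\<Sum>p\<in>B \<times> UNIV. smr (c' p) (g p)) \<in> J" using c by simp
    then show "\<exists>c. a - (\<Sum>p\<in>B \<times> UNIV. smr (c p) (g p)) \<in> J" by blast
  qed
  obtain \<psi> where \<psi>: "\<forall>x y. \<psi> (x + y) = \<psi> x + \<psi> y" "\<forall>r x. \<psi> (smr r x) = r * \<psi> x"
     "\<forall>x. \<psi> (st x) = \<psi> x" "\<forall>x\<in>J. \<psi> x = 0" "\<forall>x. x \<notin> J \<longrightarrow> 0 < \<psi> (st x * x)"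
    using psi_exists[OF saR rJ sp] by blast
  have ps_sm: "\<psi> (sm z x) = Re z * \<psi> x + Im z * \<psi> (sm \<i> x)" for z x
    using \<psi>(1,2) by (subst decomp[of z x]) simp
  have ps_minus: "\<psi> (- y) = - \<psi> y" for y
  proof -
    have "smr (-1) y = - y" by (simp add: smr_def C.sm_minus_left[of 1, simplified])
    then show ?thesis using \<psi>(2) by (metis mult_minus1)
  qed
  have ps_ist: "\<psi> (sm \<i> (st x)) = - \<psi> (sm \<i> x)" for x
  proof -
    have "st (sm \<i> x) = sm (- \<i>) (st x)" by (simp add: C.st_sm)
    also have "\<dots> = - sm \<i> (st x)" by (simp add: C.sm_minus_left)
    finally have "\<psi> (sm \<i> x) = \<psi> (- sm \<i> (st x))" using \<psi>(3) by metis
    then show ?thesis using ps_minus by simp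
  qed
  define \<phi> where "\<phi> = (\<lambda>x. complex_of_real (\<psi> x) - \<i> * complex_of_real (\<psi> (sm \<i> x)))"
  have "\<forall>x y. \<phi> (x + y) = \<phi> x + \<phi> y" using \<psi>(1) by (simp add: \<phi>_def C.sm_add algebra_simps)
  moreover have "\<forall>c x. \<phi> (sm c x) = c * \<phi> x"
  proof (intro allI)
    fix c x
    have "\<psi> (sm \<i> (sm c x)) = - Im c * \<psi> x + Re c * \<psi> (sm \<i> x)"
      using ps_sm[of "\<i> * c" x] by (simp add: C.sm_sm)
    then show "\<phi> (sm c x) = c * \<phi> x"
      using ps_sm[of c x] by (intro complex_eqI) (simp_all add: \<phi>_def algebra_simps)
  qed
  moreover have "\<forall>x. \<phi> (st x) = conjugate (\<phi> x)"
    using \<psi>(3) ps_ist by (simp add: \<phi>_def complex_eq_iff)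
  moreover have "\<forall>x\<in>J. \<phi> x = 0"
  proof
    fix x assume x: "x \<in> J"
    have "sm \<i> x \<in> J" using x LJ C.sm_scal[of \<i> x] unfolding left_ideal_of_def by metis
    then show "\<phi> x = 0" using x \<psi>(4) by (simp add: \<phi>_def)
  qed
  moreover have "\<forall>x. x \<notin> J \<longrightarrow> 0 < \<phi> (st x * x)"
  proof (intro allI impI)
    fix x assume x: "x \<notin> J"
    define h where "h = st x * x"
    have sh: "st h = h" by (simp add: h_def C.st_mult)
    have "\<psi> (sm \<i> h) = 0" using ps_ist[of h] sh by simp
    moreover have "0 < \<psi> h" using \<psi>(5) x by (simp add: h_def)
    ultimately show "0 < \<phi> (st x * x)" by (simp add: \<phi>_def h_def[symmetric] less_complex_def)
  qed
  ultimately show ?thesis by blast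
qed

theorem corollary2p9:
  fixes smR :: "real \<Rightarrow> 'a::{ring,monoid_mult} \<Rightarrow> 'a" and stR :: "'a \<Rightarrow> 'a"
    and smC :: "complex \<Rightarrow> 'b::{ring,monoid_mult} \<Rightarrow> 'b" and stC :: "'b \<Rightarrow> 'b"
  shows
   "(star_algebra smR stR \<longrightarrow>
      (\<forall>I. star_ideal stR I \<longrightarrow>
         ((real_ideal stR I \<and> fin_codim smR I) \<longleftrightarrow>
          (\<exists>n \<pi>. fd_star_rep smR stR n \<pi> \<and> I = rep_kernel n \<pi>))) \<and>
      (\<forall>I. star_ideal stR I \<and> fin_codim smR (real_radical stR I) \<longrightarrow>
         Pi_hard_radical smR stR I = real_radical stR I)) \<and>
    (star_algebra smC stC \<longrightarrow>
      (\<forall>I. star_ideal stC I \<longrightarrow>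
         ((real_ideal stC I \<and> fin_codim smC I) \<longleftrightarrow>
          (\<exists>n \<pi>. fd_star_rep smC stC n \<pi> \<and> I = rep_kernel n \<pi>))) \<and>
      (\<forall>I. star_ideal stC I \<and> fin_codim smC (real_radical stC I) \<longrightarrow>
         Pi_hard_radical smC stC I = real_radical stC I))"
proof -
  have R: "(\<forall>I. star_ideal stR I \<longrightarrow>
         ((real_ideal stR I \<and> fin_codim smR I) \<longleftrightarrow>
          (\<exists>n \<pi>. fd_star_rep smR stR n \<pi> \<and> I = rep_kernel n \<pi>))) \<and>
      (\<forall>I. star_ideal stR I \<and> fin_codim smR (real_radical stR I) \<longrightarrow>
         Pi_hard_radical smR stR I = real_radical stR I)" if sa: "star_algebra smR stR"
    by (rule main_generic[OF sa sqr_real PHI_real[OF sa]])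
  have C: "(\<forall>I. star_ideal stC I \<longrightarrow>
         ((real_ideal stC I \<and> fin_codim smC I) \<longleftrightarrow>
          (\<exists>n \<pi>. fd_star_rep smC stC n \<pi> \<and> I = rep_kernel n \<pi>))) \<and>
      (\<forall>I. star_ideal stC I \<and> fin_codim smC (real_radical stC I) \<longrightarrow>
         Pi_hard_radical smC stC I = real_radical stC I)" if sa: "star_algebra smC stC"
    by (rule main_generic[OF sa sqr_complex PHI_complex[OF sa]])
  show ?thesis using R C by blast
qed

end
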